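(* Let $S$ be a strongly $E^*$-unitary inverse semigroup with pure grading $\varphi:S^\times\to G$ and idempotent semilattice $E$. Then $(\{\mathcal T_c(E_g)\}_{g\in G},\{\hat\phi_g\}_{g\in G})$ is a partial action of $G$ on the generalized Boolean algebra $\mathcal T_c(E)$.
   Context: A generalized Boolean algebra is a distributive, relatively complemented lattice with least element $0$; an ideal is a subset closed under joins and under meets with arbitrary elements. A partial action of a group $G$ (identity $e$) on $\mathcal B$ is a family of ideals $\mathcal I_t$ and generalized Boolean algebra isomorphisms $\phi_t:\mathcal I_{t^{-1}}\to\mathcal I_t$ with (i) $\mathcal I_e=\mathcal B$, $\phi_e=\mathrm{id}$; (ii) $\phi_s(\mathcal I_{s^{-1}}\cap\mathcal I_t)=\mathcal I_s\cap\mathcal I_{st}$; (iii) $\phi_s\phi_t(x)=\phi_{st}(x)$ for $x\in\mathcal I_{t^{-1}}\cap\mathcal I_{(st)^{-1}}$. Tight filters: for a meet semilattice $P$ with $0$, a filter is a subset $F$, $\emptyset\ne F\ne P$, closed upwards and under meets; $F(P)$ has the topology generated by $\{F:x\in F\}$; the tight filters $T(P)$ are the closure of the ultrafilters (maximal filters); $V^P_{(x:x_1,\dots,x_n)}=\{\xi\in T(P):x\in\xi,\ x_1,\dots,x_n\notin\xi\}$, $V^P_x=V^P_{(x:)}$; these form a basis of compact open sets, and $\mathcal T_c(P)$ is the generalized Boolean algebra of compact open subsets of $T(P)$. Inverse semigroups: $S$ is an inverse semigroup with zero, $s^*$ the unique inverse of $s$, $E$ its idempotents, a meet semilattice with $x\wedge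 y=xy$ and least element $0$ ($x\le y$ iff $x=xy$); $S^\times=S\setminus\{0\}$, $E^\times=E\setminus\{0\}$. A pure grading is a map $\varphi:S^\times\to G$ to a group with $\varphi(ab)=\varphi(a)\varphi(b)$ whenever $ab\ne0$ and $\varphi^{-1}(1_G)=E^\times$; $S$ is strongly $E^*$-unitary if it has one. For $g\in G$, $E_g=\{x\in E: x\le ss^*$ for some $s$ with $\varphi(s)=g\}$ if $\varphi^{-1}(g)\ne\emptyset$, and $E_g=\{0\}$ otherwise; $E_g$ is downward closed and $E_e=E$. The map $\phi_g:E_{g^{-1}}\to E_g$, $x\mapsto sxs^*$ for any $s$ with $\varphi(s)=g$ and $x\le s^*s$, is a well-defined meet-semilattice isomorphism. Since $E_g$ is downward closed, $\mathcal T_c(E_g)$ is identified with the set of compact open subsets of $T(E)$ contained in $\bigcup_{x\in E_g}V^E_x$ (an ideal of $\mathcal T_c(E)$), via $U\mapsto\{\xi\in T(E):\xi\cap E_g\ne\emptyset,\ \xi\cap E_g\in U\}$, sending $V^{E_g}_{(x:x_1,\dots,x_n)}\mapsto V^E_{(x:x_1,\dots,x_n)}$. The isomorphism $\phi_g$ induces a homeomorphism $T(E_{g^{-1}})\to T(E_g)$, $\xi\mapsto\phi_g(\xi)$, hence a generalized Boolean algebra isomorphism $\hat\phi_g:\mathcal T_c(E_{g^{-1}})\to\mathcal T_c(E_g)$ with $\hat\phi_g(V_{(x:x_1,\dots,x_n)})=V_{(\phi_g(x):\phi_g(x_1),\dots,\phi_g(x_n))}$. *)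

theory Defs
  imports "HOL-Analysis.Analysis" "HOL-Algebra.Group"
begin

definition inverse_semigroup_zero :: "('a \<Rightarrow> 'a \<Rightarrow> 'a) \<Rightarrow> 'a \<Rightarrow> bool" where
  "inverse_semigroup_zero sm z \<longleftrightarrow>
     (\<forall>a b c. sm (sm a b) c = sm a (sm b c)) \<and>
     (\<forall>s. \<exists>!t. sm (sm s t) s = s \<and> sm (sm t s) t = t) \<and>
     (\<forall>s. sm z s = z \<and> sm s z = z)"

definition istar :: "('a \<Rightarrow> 'a \<Rightarrow> 'a) \<Rightarrow> 'a \<Rightarrow> 'a" where
  "istar sm s = (THE t. sm (sm s t) s = s \<and> sm (sm t s) t = t)"

definition idems :: "('a \<Rightarrow> 'a \<Rightarrow> 'a) \<Rightarrow> 'a set" where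
  "idems sm = {e. sm e e = e}"

definition sleq :: "('a \<Rightarrow> 'a \<Rightarrow> 'a) \<Rightarrow> 'a \<Rightarrow> 'a \<Rightarrow> bool" where
  "sleq m x y \<longleftrightarrow> x = m x y"

text \<open>Pure grading \<phi> : S minus zero \<rightarrow> G (values of \<phi> at the zero are irrelevant).\<close>
definition pure_grading ::
  "('a \<Rightarrow> 'a \<Rightarrow> 'a) \<Rightarrow> 'a \<Rightarrow> ('g, 'b) monoid_scheme \<Rightarrow> ('a \<Rightarrow> 'g) \<Rightarrow> bool" where
  "pure_grading sm z G \<phi> \<longleftrightarrow>
     (\<forall>s. s \<noteq> z \<longrightarrow> \<phi> s \<in> carrier G) \<and>
     (\<forall>a b. a \<noteq> z \<longrightarrow> b \<noteq> z \<longrightarrow> sm a b \<noteq> z \<longrightarrow> \<phi> (sm a b) = \<phi> a \<otimes>\<^bsub>G\<^esub> \<phi> b) \<and>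
     {s. s \<noteq> z \<and> \<phi> s = \<one>\<^bsub>G\<^esub>} = idems sm - {z}"

definition Eg :: "('a \<Rightarrow> 'a \<Rightarrow> 'a) \<Rightarrow> 'a \<Rightarrow> ('a \<Rightarrow> 'g) \<Rightarrow> 'g \<Rightarrow> 'a set" where
  "Eg sm z \<phi> g =
     (if (\<exists>s. s \<noteq> z \<and> \<phi> s = g)
      then {x \<in> idems sm. \<exists>s. s \<noteq> z \<and> \<phi> s = g \<and> sleq sm x (sm s (istar sm s))}
      else {z})"

text \<open>\<phi>_g : E_{g^-1} \<rightarrow> E_g, x \<mapsto> s x s* for any s with \<phi>(s) = g and x \<le> s*s.\<close>
definition phig :: "('a \<Rightarrow> 'a \<Rightarrow> 'a) \<Rightarrow> 'a \<Rightarrow> ('a \<Rightarrow> 'g) \<Rightarrow> 'g \<Rightarrow> 'a \<Rightarrow> 'a" where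
  "phig sm z \<phi> g x =
     (let s = (SOME s. s \<noteq> z \<and> \<phi> s = g \<and> sleq sm x (sm (istar sm s) s))
      in sm (sm s x) (istar sm s))"

definition is_filter :: "'a set \<Rightarrow> ('a \<Rightarrow> 'a \<Rightarrow> 'a) \<Rightarrow> 'a set \<Rightarrow> bool" where
  "is_filter P m F \<longleftrightarrow> F \<noteq> {} \<and> F \<subseteq> P \<and> F \<noteq> P \<and>
     (\<forall>x\<in>F. \<forall>y\<in>P. sleq m x y \<longrightarrow> y \<in> F) \<and>
     (\<forall>x\<in>F. \<forall>y\<in>F. m x y \<in> F)"

definition filters :: "'a set \<Rightarrow> ('a \<Rightarrow> 'a \<Rightarrow> 'a) \<Rightarrow> 'a set set" where
  "filters P m = {F. is_filter P m F}"

definition ultrafilters :: "'a set \<Rightarrow> ('a \<Rightarrow> 'a \<Rightarrow> 'a) \<Rightarrow> 'a set set" where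
  "ultrafilters P m = {F \<in> filters P m. \<forall>F' \<in> filters P m. F \<subseteq> F' \<longrightarrow> F' = F}"

definition filter_topology :: "'a set \<Rightarrow> ('a \<Rightarrow> 'a \<Rightarrow> 'a) \<Rightarrow> 'a set topology" where
  "filter_topology P m =
     subtopology
       (topology_generated_by ({{F \<in> filters P m. x \<in> F} | x. x \<in> P} \<union>
                               {{F \<in> filters P m. x \<notin> F} | x. x \<in> P}))
       (filters P m)"

definition tight_filters :: "'a set \<Rightarrow> ('a \<Rightarrow> 'a \<Rightarrow> 'a) \<Rightarrow> 'a set set" where
  "tight_filters P m = (filter_topology P m) closure_of (ultrafilters P m)"

definition tight_topology :: "'a set \<Rightarrow> ('a \<Rightarrow> 'a \<Rightarrow> 'a) \<Rightarrow> 'a set topology" where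
  "tight_topology P m = subtopology (filter_topology P m) (tight_filters P m)"

definition Tc :: "'a set \<Rightarrow> ('a \<Rightarrow> 'a \<Rightarrow> 'a) \<Rightarrow> 'a set set set" where
  "Tc P m = {U. openin (tight_topology P m) U \<and> compactin (tight_topology P m) U}"

definition hat_phig :: "('a \<Rightarrow> 'a \<Rightarrow> 'a) \<Rightarrow> 'a \<Rightarrow> ('a \<Rightarrow> 'g) \<Rightarrow> 'g \<Rightarrow> 'a set set \<Rightarrow> 'a set set" where
  "hat_phig sm z \<phi> g U = (\<lambda>\<xi>. phig sm z \<phi> g ` \<xi>) ` U"

text \<open>The identification of T_c(E_g) with an ideal of T_c(E).\<close>
definition iota :: "('a \<Rightarrow> 'a \<Rightarrow> 'a) \<Rightarrow> 'a \<Rightarrow> ('a \<Rightarrow> 'g) \<Rightarrow> 'g \<Rightarrow> 'a set set \<Rightarrow> 'a set set" where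
  "iota sm z \<phi> g U =
     {\<xi> \<in> tight_filters (idems sm) sm. \<xi> \<inter> Eg sm z \<phi> g \<noteq> {} \<and> \<xi> \<inter> Eg sm z \<phi> g \<in> U}"

definition Ig :: "('a \<Rightarrow> 'a \<Rightarrow> 'a) \<Rightarrow> 'a \<Rightarrow> ('a \<Rightarrow> 'g) \<Rightarrow> 'g \<Rightarrow> 'a set set set" where
  "Ig sm z \<phi> g = iota sm z \<phi> g ` Tc (Eg sm z \<phi> g) sm"

text \<open>\<phi>_g viewed as a map I_{g^-1} \<rightarrow> I_g inside T_c(E).\<close>
definition theta :: "('a \<Rightarrow> 'a \<Rightarrow> 'a) \<Rightarrow> 'a \<Rightarrow> ('g, 'b) monoid_scheme \<Rightarrow> ('a \<Rightarrow> 'g) \<Rightarrow> 'g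
                      \<Rightarrow> 'a set set \<Rightarrow> 'a set set" where
  "theta sm z G \<phi> g V =
     iota sm z \<phi> g (hat_phig sm z \<phi> g
        (THE U. U \<in> Tc (Eg sm z \<phi> (inv\<^bsub>G\<^esub> g)) sm \<and> iota sm z \<phi> (inv\<^bsub>G\<^esub> g) U = V))"

text \<open>B is a family of sets, with join = union, meet = intersection.\<close>
definition gba_ideal :: "'x set set \<Rightarrow> 'x set set \<Rightarrow> bool" where
  "gba_ideal B I \<longleftrightarrow> I \<subseteq> B \<and> (\<forall>a\<in>I. \<forall>b\<in>I. a \<union> b \<in> I) \<and> (\<forall>a\<in>I. \<forall>b\<in>B. a \<inter> b \<in> I)"

definition gba_iso :: "'x set set \<Rightarrow> 'x set set \<Rightarrow> ('x set \<Rightarrow> 'x set) \<Rightarrow> bool" where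
  "gba_iso I J f \<longleftrightarrow> bij_betw f I J \<and>
     (\<forall>a\<in>I. \<forall>b\<in>I. f (a \<union> b) = f a \<union> f b \<and> f (a \<inter> b) = f a \<inter> f b \<and> f (a - b) = f a - f b)"

definition partial_action ::
  "('g, 'b) monoid_scheme \<Rightarrow> 'x set set \<Rightarrow> ('g \<Rightarrow> 'x set set) \<Rightarrow> ('g \<Rightarrow> 'x set \<Rightarrow> 'x set) \<Rightarrow> bool" where
  "partial_action G B I f \<longleftrightarrow>
     (\<forall>t\<in>carrier G. gba_ideal B (I t) \<and> gba_iso (I (inv\<^bsub>G\<^esub> t)) (I t) (f t)) \<and>
     I \<one>\<^bsub>G\<^esub> = B \<and> (\<forall>x\<in>B. f \<one>\<^bsub>G\<^esub> x = x) \<and>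
     (\<forall>s\<in>carrier G. \<forall>t\<in>carrier G.
        f s ` (I (inv\<^bsub>G\<^esub> s) \<inter> I t) = I s \<inter> I (s \<otimes>\<^bsub>G\<^esub> t)) \<and>
     (\<forall>s\<in>carrier G. \<forall>t\<in>carrier G. \<forall>x \<in> I (inv\<^bsub>G\<^esub> t) \<inter> I (inv\<^bsub>G\<^esub> (s \<otimes>\<^bsub>G\<^esub> t)).
        f s (f t x) = f (s \<otimes>\<^bsub>G\<^esub> t) x)"

end

theory Submission
  imports Defs
begin

definition up :: "'a set \<Rightarrow> ('a \<Rightarrow> 'a \<Rightarrow> 'a) \<Rightarrow> 'a set \<Rightarrow> 'a set" where
  "up P m A = {y \<in> P. \<exists>a\<in>A. sleq m a y}"

definition nbh :: "'a set \<Rightarrow> ('a \<Rightarrow> 'a \<Rightarrow> 'a) \<Rightarrow> 'a set \<Rightarrow> 'a set \<Rightarrow> 'a set set" where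
  "nbh P m X Y = {F \<in> filters P m. X \<subseteq> F \<and> Y \<inter> F = {}}"

lemma topspace_FT: "topspace (filter_topology P m) = filters P m"
proof -
  have "filters P m \<subseteq> \<Union>({{F \<in> filters P m. x \<in> F} | x. x \<in> P} \<union>
                               {{F \<in> filters P m. x \<notin> F} | x. x \<in> P})"
  proof
    fix F assume F: "F \<in> filters P m"
    then obtain x where "x \<in> F" "x \<in> P" unfolding filters_def is_filter_def by blast
    then show "F \<in> \<Union>({{F \<in> filters P m. x \<in> F} | x. x \<in> P} \<union>
                               {{F \<in> filters P m. x \<notin> F} | x. x \<in> P})" using F by blast
  qed
  then show ?thesis unfolding filter_topology_def by auto
qed

lemma open_basic_in: "x \<in> P \<Longrightarrow> openin (filter_topology P m) {F \<in> filters P m. x \<in> F}"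
proof -
  assume x: "x \<in> P"
  let ?S = "{{F \<in> filters P m. x \<in> F} | x. x \<in> P} \<union> {{F \<in> filters P m. x \<notin> F} | x. x \<in> P}"
  have "openin (topology_generated_by ?S) {F \<in> filters P m. x \<in> F}"
    by (rule topology_generated_by_Basis) (use x in blast)
  then have "openin (subtopology (topology_generated_by ?S) (filters P m)) ({F \<in> filters P m. x \<in> F} \<inter> filters P m)"
    by (rule openin_subtopology_Int)
  then show ?thesis unfolding filter_topology_def by (simp add: Int_absorb2)
qed

lemma open_basic_notin: "x \<in> P \<Longrightarrow> openin (filter_topology P m) {F \<in> filters P m. x \<notin> F}"
proof -
  assume x: "x \<in> P"
  let ?S = "{{F \<in> filters P m. x \<in> F} | x. x \<in> P} \<union> {{F \<in> filters P m. x \<notin> F} | x. x \<in> P}"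
  have "openin (topology_generated_by ?S) {F \<in> filters P m. x \<notin> F}"
    by (rule topology_generated_by_Basis) (use x in blast)
  then have "openin (subtopology (topology_generated_by ?S) (filters P m)) ({F \<in> filters P m. x \<notin> F} \<inter> filters P m)"
    by (rule openin_subtopology_Int)
  then show ?thesis unfolding filter_topology_def by (simp add: Int_absorb2)
qed

lemma open_nbh_Y: "finite Y \<Longrightarrow> Y \<subseteq> P \<Longrightarrow> openin (filter_topology P m) (nbh P m {} Y)"
proof (induction Y rule: finite_induct)
  case empty
  then show ?case using openin_topspace[of "filter_topology P m"] by (simp add: topspace_FT nbh_def)
next
  case (insert y Y)
  have "nbh P m {} (insert y Y) = nbh P m {} Y \<inter> {F \<in> filters P m. y \<notin> F}"
    unfolding nbh_def by auto
  then show ?case using insert open_basic_notin[of y P m] by auto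
qed

lemma open_nbh: "finite X \<Longrightarrow> finite Y \<Longrightarrow> X \<subseteq> P \<Longrightarrow> Y \<subseteq> P \<Longrightarrow> openin (filter_topology P m) (nbh P m X Y)"
proof (induction X rule: finite_induct)
  case empty
  then show ?case using open_nbh_Y by blast
next
  case (insert x X)
  have "nbh P m (insert x X) Y = nbh P m X Y \<inter> {F \<in> filters P m. x \<in> F}"
    unfolding nbh_def by auto
  then show ?case using insert open_basic_in[of x P m] by auto
qed

lemma nbh_of_open:
  assumes "openin (filter_topology P m) W" "\<xi> \<in> W"
  shows "\<exists>X Y. finite X \<and> finite Y \<and> X \<subseteq> P \<and> Y \<subseteq> P \<and> \<xi> \<in> nbh P m X Y \<and> nbh P m X Y \<subseteq> W"
proof -
  let ?S = "{{F \<in> filters P m. x \<in> F} | x. x \<in> P} \<union> {{F \<in> filters P m. x \<notin> F} | x. x \<in> P}"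
  obtain T where T: "openin (topology_generated_by ?S) T" "W = T \<inter> filters P m"
    using assms(1) unfolding filter_topology_def openin_subtopology by blast
  have g: "generate_topology_on ?S T" using T(1) openin_topology_generated_by by blast
  have all: "\<forall>\<xi>\<in>T \<inter> filters P m. \<exists>X Y. finite X \<and> finite Y \<and> X \<subseteq> P \<and> Y \<subseteq> P \<and> \<xi> \<in> nbh P m X Y \<and> nbh P m X Y \<subseteq> T"
    using g
  proof (induction)
    case Empty
    then show ?case by simp
  next
    case (Int a b)
    show ?case
    proof
      fix \<xi> assume "\<xi> \<in> a \<inter> b \<inter> filters P m"
      then have xa: "\<xi> \<in> a \<inter> filters P m" and xb: "\<xi> \<in> b \<inter> filters P m" by auto
      obtain X1 Y1 where 1: "finite X1 \<and> finite Y1 \<and> X1 \<subseteq> P \<and> Y1 \<subseteq> P \<and> \<xi> \<in> nbh P m X1 Y1 \<and> nbh P m X1 Y1 \<subseteq> a"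
        using bspec[OF Int.IH(1) xa] by iprover
      obtain X2 Y2 where 2: "finite X2 \<and> finite Y2 \<and> X2 \<subseteq> P \<and> Y2 \<subseteq> P \<and> \<xi> \<in> nbh P m X2 Y2 \<and> nbh P m X2 Y2 \<subseteq> b"
        using bspec[OF Int.IH(2) xb] by iprover
      have n1: "nbh P m (X1 \<union> X2) (Y1 \<union> Y2) \<subseteq> nbh P m X1 Y1 \<inter> nbh P m X2 Y2" unfolding nbh_def by auto
      have n2: "\<xi> \<in> nbh P m (X1 \<union> X2) (Y1 \<union> Y2)" using 1 2 unfolding nbh_def by auto
      have "finite (X1 \<union> X2) \<and> finite (Y1 \<union> Y2) \<and> X1 \<union> X2 \<subseteq> P \<and> Y1 \<union> Y2 \<subseteq> P \<and> \<xi> \<in> nbh P m (X1 \<union> X2) (Y1 \<union> Y2) \<and> nbh P m (X1 \<union> X2) (Y1 \<union> Y2) \<subseteq> a \<inter> b"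
        using 1 2 n1 n2 by blast
      then show "\<exists>X Y. finite X \<and> finite Y \<and> X \<subseteq> P \<and> Y \<subseteq> P \<and> \<xi> \<in> nbh P m X Y \<and> nbh P m X Y \<subseteq> a \<inter> b"
        by blast
    qed
  next
    case (UN K)
    show ?case
    proof
      fix \<xi> assume "\<xi> \<in> \<Union>K \<inter> filters P m"
      then obtain k where kK: "k \<in> K" and xk: "\<xi> \<in> k \<inter> filters P m" by blast
      obtain X Y where XY: "finite X \<and> finite Y \<and> X \<subseteq> P \<and> Y \<subseteq> P \<and> \<xi> \<in> nbh P m X Y \<and> nbh P m X Y \<subseteq> k"
        using bspec[OF UN.IH[OF kK] xk] by iprover
      have "nbh P m X Y \<subseteq> \<Union>K" using XY kK by blast
      then have "finite X \<and> finite Y \<and> X \<subseteq> P \<and> Y \<subseteq> P \<and> \<xi> \<in> nbh P m X Y \<and> nbh P m X Y \<subseteq> \<Union>K"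
        using XY by blast
      then show "\<exists>X Y. finite X \<and> finite Y \<and> X \<subseteq> P \<and> Y \<subseteq> P \<and> \<xi> \<in> nbh P m X Y \<and> nbh P m X Y \<subseteq> \<Union>K"
        by blast
    qed
  next
    case (Basis s)
    show ?case
    proof
      fix \<xi> assume xi: "\<xi> \<in> s \<inter> filters P m"
      from Basis.hyps obtain x where x: "x \<in> P" and "s = {F \<in> filters P m. x \<in> F} \<or> s = {F \<in> filters P m. x \<notin> F}"
        by blast
      then consider "x \<in> P" "s = {F \<in> filters P m. x \<in> F}"
        | "x \<in> P" "s = {F \<in> filters P m. x \<notin> F}" by blast
      then show "\<exists>X Y. finite X \<and> finite Y \<and> X \<subseteq> P \<and> Y \<subseteq> P \<and> \<xi> \<in> nbh P m X Y \<and> nbh P m X Y \<subseteq> s"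
      proof cases
        case 1
        then show ?thesis using xi by (intro exI[of _ "{x}"] exI[of _ "{}"]) (auto simp: nbh_def)
      next
        case 2
        then show ?thesis using xi by (intro exI[of _ "{}"] exI[of _ "{x}"]) (auto simp: nbh_def)
      qed
    qed
  qed
  have xiT: "\<xi> \<in> T \<inter> filters P m" using assms(2) T by blast
  obtain X Y where XY: "finite X \<and> finite Y \<and> X \<subseteq> P \<and> Y \<subseteq> P \<and> \<xi> \<in> nbh P m X Y \<and> nbh P m X Y \<subseteq> T"
    using bspec[OF all xiT] by iprover
  moreover have "nbh P m X Y \<subseteq> filters P m" unfolding nbh_def by auto
  ultimately have "finite X \<and> finite Y \<and> X \<subseteq> P \<and> Y \<subseteq> P \<and> \<xi> \<in> nbh P m X Y \<and> nbh P m X Y \<subseteq> W"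
    using T(2) by blast
  then show ?thesis by blast
qed

lemma filter_sub: "F \<in> filters P m \<Longrightarrow> F \<subseteq> P"
  unfolding filters_def is_filter_def by blast

lemma ultra_filters: "ultrafilters P m \<subseteq> filters P m"
  unfolding ultrafilters_def by blast

lemma tight_iff:
  "\<xi> \<in> tight_filters P m \<longleftrightarrow> \<xi> \<in> filters P m \<and>
     (\<forall>X Y. finite X \<longrightarrow> finite Y \<longrightarrow> X \<subseteq> \<xi> \<longrightarrow> Y \<subseteq> P \<longrightarrow> Y \<inter> \<xi> = {} \<longrightarrow>
        (\<exists>U\<in>ultrafilters P m. X \<subseteq> U \<and> Y \<inter> U = {}))"
proof
  assume xi: "\<xi> \<in> tight_filters P m"
  then have f: "\<xi> \<in> filters P m" and cl: "\<And>T. \<xi> \<in> T \<Longrightarrow> openin (filter_topology P m) T \<Longrightarrow> (\<exists>y\<in>ultrafilters P m. y \<in> T)"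
    unfolding tight_filters_def closure_of_def topspace_FT by auto
  show "\<xi> \<in> filters P m \<and>
     (\<forall>X Y. finite X \<longrightarrow> finite Y \<longrightarrow> X \<subseteq> \<xi> \<longrightarrow> Y \<subseteq> P \<longrightarrow> Y \<inter> \<xi> = {} \<longrightarrow>
        (\<exists>U\<in>ultrafilters P m. X \<subseteq> U \<and> Y \<inter> U = {}))"
  proof (intro conjI allI impI f)
    fix X Y assume XY: "finite X" "finite Y" "X \<subseteq> \<xi>" "Y \<subseteq> P" "Y \<inter> \<xi> = {}"
    have XP: "X \<subseteq> P" using XY(3) filter_sub[OF f] by blast
    have o: "openin (filter_topology P m) (nbh P m X Y)" using open_nbh XY XP by blast
    have i: "\<xi> \<in> nbh P m X Y" using f XY unfolding nbh_def by blast
    obtain U where "U \<in> ultrafilters P m" "U \<in> nbh P m X Y"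
      using cl[OF i o] by blast
    then show "\<exists>U\<in>ultrafilters P m. X \<subseteq> U \<and> Y \<inter> U = {}" unfolding nbh_def by blast
  qed
next
  assume A: "\<xi> \<in> filters P m \<and>
     (\<forall>X Y. finite X \<longrightarrow> finite Y \<longrightarrow> X \<subseteq> \<xi> \<longrightarrow> Y \<subseteq> P \<longrightarrow> Y \<inter> \<xi> = {} \<longrightarrow>
        (\<exists>U\<in>ultrafilters P m. X \<subseteq> U \<and> Y \<inter> U = {}))"
  have f: "\<xi> \<in> filters P m" using A by (rule conjunct1)
  have A2: "\<And>X Y. finite X \<Longrightarrow> finite Y \<Longrightarrow> X \<subseteq> \<xi> \<Longrightarrow> Y \<subseteq> P \<Longrightarrow> Y \<inter> \<xi> = {} \<Longrightarrow>
        (\<exists>U\<in>ultrafilters P m. X \<subseteq> U \<and> Y \<inter> U = {})"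
    using A by (intro A[THEN conjunct2, rule_format])
  have cl: "\<exists>y\<in>ultrafilters P m. y \<in> T" if T1: "\<xi> \<in> T" and T2: "openin (filter_topology P m) T" for T
  proof -
    obtain X Y where XY: "finite X \<and> finite Y \<and> X \<subseteq> P \<and> Y \<subseteq> P \<and> \<xi> \<in> nbh P m X Y \<and> nbh P m X Y \<subseteq> T"
      using nbh_of_open[OF T2 T1] by iprover
    have s: "X \<subseteq> \<xi>" "Y \<inter> \<xi> = {}" using XY unfolding nbh_def by auto
    have fin: "finite X" "finite Y" "Y \<subseteq> P" using XY by auto
    obtain U where U: "U\<in>ultrafilters P m" "X \<subseteq> U" "Y \<inter> U = {}"
      using A2[OF fin(1,2) s(1) fin(3) s(2)] by blast
    then have "U \<in> nbh P m X Y" using ultra_filters unfolding nbh_def by blast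
    then show "\<exists>y\<in>ultrafilters P m. y \<in> T" using U(1) XY by blast
  qed
  show "\<xi> \<in> tight_filters P m"
    unfolding tight_filters_def closure_of_def topspace_FT using f cl by blast
qed

lemma tightD:
  assumes "\<xi> \<in> tight_filters P m" "finite X" "finite Y" "X \<subseteq> \<xi>" "Y \<subseteq> P" "Y \<inter> \<xi> = {}"
  shows "\<exists>U\<in>ultrafilters P m. X \<subseteq> U \<and> Y \<inter> U = {}"
  using assms(1) unfolding tight_iff[of \<xi>] using assms(2-) by (elim conjE allE impE) iprover+

lemma tight_filters_sub: "tight_filters P m \<subseteq> filters P m"
  using tight_iff by blast

lemma ultra_tight: "ultrafilters P m \<subseteq> tight_filters P m"
  unfolding tight_filters_def using closure_of_subset[of "ultrafilters P m" "filter_topology P m"]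
    ultra_filters topspace_FT by metis

lemma topspace_TT: "topspace (tight_topology P m) = tight_filters P m"
  unfolding tight_topology_def using tight_filters_sub topspace_FT by (metis inf.absorb_iff2 topspace_subtopology)

lemma open_tight_in: "x \<in> P \<Longrightarrow> openin (tight_topology P m) {F \<in> tight_filters P m. x \<in> F}"
proof -
  assume "x \<in> P"
  then have "openin (tight_topology P m) (tight_filters P m \<inter> {F \<in> filters P m. x \<in> F})"
    unfolding tight_topology_def by (intro openin_subtopology_Int2 open_basic_in)
  moreover have "tight_filters P m \<inter> {F \<in> filters P m. x \<in> F} = {F \<in> tight_filters P m. x \<in> F}"
    using tight_filters_sub by blast
  ultimately show ?thesis by simp
qed

lemma open_tight_notin: "x \<in> P \<Longrightarrow> openin (tight_topology P m) {F \<in> tight_filters P m. x \<notin> F}"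
proof -
  assume "x \<in> P"
  then have "openin (tight_topology P m) (tight_filters P m \<inter> {F \<in> filters P m. x \<notin> F})"
    unfolding tight_topology_def by (intro openin_subtopology_Int2 open_basic_notin)
  moreover have "tight_filters P m \<inter> {F \<in> filters P m. x \<notin> F} = {F \<in> tight_filters P m. x \<notin> F}"
    using tight_filters_sub by blast
  ultimately show ?thesis by simp
qed

lemma cont_into_tight:
  assumes "\<And>\<xi>. \<xi> \<in> topspace X \<Longrightarrow> f \<xi> \<in> tight_filters P m"
    and "\<And>x. x \<in> P \<Longrightarrow> openin X {\<xi> \<in> topspace X. x \<in> f \<xi>}"
    and "\<And>x. x \<in> P \<Longrightarrow> openin X {\<xi> \<in> topspace X. x \<notin> f \<xi>}"
  shows "continuous_map X (tight_topology P m) f"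
proof -
  let ?S = "{{F \<in> filters P m. x \<in> F} | x. x \<in> P} \<union> {{F \<in> filters P m. x \<notin> F} | x. x \<in> P}"
  have tt: "tight_topology P m = subtopology (topology_generated_by ?S) (filters P m \<inter> tight_filters P m)"
    unfolding tight_topology_def filter_topology_def subtopology_subtopology by simp
  have ft: "f \<xi> \<in> filters P m" if "\<xi> \<in> topspace X" for \<xi> using assms(1) that tight_filters_sub by blast
  have c: "continuous_map X (topology_generated_by ?S) f"
  proof (rule continuous_on_generated_topo)
    fix U assume "U \<in> ?S"
    then consider x where "x \<in> P" "U = {F \<in> filters P m. x \<in> F}"
        | x where "x \<in> P" "U = {F \<in> filters P m. x \<notin> F}" by blast
    then show "openin X (f -` U \<inter> topspace X)"
    proof cases
      case (1 x)
      then have "f -` U \<inter> topspace X = {\<xi> \<in> topspace X. x \<in> f \<xi>}" using ft by auto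
      then show ?thesis using assms(2) 1 by simp
    next
      case (2 x)
      then have "f -` U \<inter> topspace X = {\<xi> \<in> topspace X. x \<notin> f \<xi>}" using ft by auto
      then show ?thesis using assms(3) 2 by simp
    qed
  next
    show "f ` topspace X \<subseteq> \<Union> ?S"
    proof
      fix F assume "F \<in> f ` topspace X"
      then have F: "F \<in> filters P m" using ft by blast
      then obtain x where "x \<in> F" "x \<in> P" unfolding filters_def is_filter_def by blast
      then show "F \<in> \<Union> ?S" using F by blast
    qed
  qed
  show ?thesis unfolding tt continuous_map_in_subtopology using c ft assms(1) by blast
qed

lemma Hausdorff_TT: "Hausdorff_space (tight_topology P m)"
proof -
  have "Hausdorff_space (filter_topology P m)"
    unfolding Hausdorff_space_def topspace_FT
  proof (intro allI impI)
    fix F1 F2 assume A: "F1 \<in> filters P m \<and> F2 \<in> filters P m \<and> F1 \<noteq> F2"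
    then obtain x where x: "x \<in> P" "(x \<in> F1 \<and> x \<notin> F2) \<or> (x \<notin> F1 \<and> x \<in> F2)"
      using filter_sub by blast
    then show "\<exists>U V. openin (filter_topology P m) U \<and> openin (filter_topology P m) V \<and> F1 \<in> U \<and> F2 \<in> V \<and> disjnt U V"
    proof (cases "x \<in> F1")
      case True
      then show ?thesis using x A open_basic_in[OF x(1)] open_basic_notin[OF x(1)]
        by (intro exI[of _ "{F \<in> filters P m. x \<in> F}"] exI[of _ "{F \<in> filters P m. x \<notin> F}"]) (auto simp: disjnt_def)
    next
      case False
      then show ?thesis using x A open_basic_in[OF x(1)] open_basic_notin[OF x(1)]
        by (intro exI[of _ "{F \<in> filters P m. x \<notin> F}"] exI[of _ "{F \<in> filters P m. x \<in> F}"]) (auto simp: disjnt_def)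
    qed
  qed
  then show ?thesis unfolding tight_topology_def by (rule Hausdorff_space_subtopology)
qed

locale msl =
  fixes P :: "'a set" and m :: "'a \<Rightarrow> 'a \<Rightarrow> 'a" and zr :: 'a
  assumes closed: "x \<in> P \<Longrightarrow> y \<in> P \<Longrightarrow> m x y \<in> P"
    and comm: "x \<in> P \<Longrightarrow> y \<in> P \<Longrightarrow> m x y = m y x"
    and assoc: "x \<in> P \<Longrightarrow> y \<in> P \<Longrightarrow> w \<in> P \<Longrightarrow> m (m x y) w = m x (m y w)"
    and idem: "x \<in> P \<Longrightarrow> m x x = x"
    and zr_in: "zr \<in> P"
    and zr_le: "x \<in> P \<Longrightarrow> m zr x = zr"
begin

lemma le_refl: "x \<in> P \<Longrightarrow> sleq m x x"
  unfolding sleq_def using idem by simp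

lemma le_trans: "x \<in> P \<Longrightarrow> y \<in> P \<Longrightarrow> w \<in> P \<Longrightarrow> sleq m x y \<Longrightarrow> sleq m y w \<Longrightarrow> sleq m x w"
  unfolding sleq_def by (metis assoc)

lemma le_antisym: "x \<in> P \<Longrightarrow> y \<in> P \<Longrightarrow> sleq m x y \<Longrightarrow> sleq m y x \<Longrightarrow> x = y"
  unfolding sleq_def by (metis comm)

lemma meet_le1: "x \<in> P \<Longrightarrow> y \<in> P \<Longrightarrow> sleq m (m x y) x"
  unfolding sleq_def by (metis assoc comm idem)

lemma meet_le2: "x \<in> P \<Longrightarrow> y \<in> P \<Longrightarrow> sleq m (m x y) y"
  unfolding sleq_def by (metis assoc idem)

lemma le_meet: "u \<in> P \<Longrightarrow> x \<in> P \<Longrightarrow> y \<in> P \<Longrightarrow> sleq m u x \<Longrightarrow> sleq m u y \<Longrightarrow> sleq m u (m x y)"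
  unfolding sleq_def by (metis assoc)

lemma zr_least: "x \<in> P \<Longrightarrow> sleq m zr x"
  unfolding sleq_def using zr_le by simp

lemma meet_mono: "a \<in> P \<Longrightarrow> b \<in> P \<Longrightarrow> c \<in> P \<Longrightarrow> sleq m a b \<Longrightarrow> sleq m (m a c) (m b c)"
  by (meson closed le_meet le_trans meet_le1 meet_le2)

lemma le_zr: "x \<in> P \<Longrightarrow> sleq m x zr \<Longrightarrow> x = zr"
  using le_antisym zr_in zr_least by blast

lemma filter_iff: "is_filter P m F \<longleftrightarrow> F \<noteq> {} \<and> F \<subseteq> P \<and> zr \<notin> F \<and>
     (\<forall>x\<in>F. \<forall>y\<in>P. sleq m x y \<longrightarrow> y \<in> F) \<and> (\<forall>x\<in>F. \<forall>y\<in>F. m x y \<in> F)"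
proof
  assume A: "is_filter P m F"
  have "zr \<notin> F"
  proof
    assume "zr \<in> F"
    then have "P \<subseteq> F" using A zr_least unfolding is_filter_def by blast
    then show False using A unfolding is_filter_def by blast
  qed
  then show "F \<noteq> {} \<and> F \<subseteq> P \<and> zr \<notin> F \<and>
     (\<forall>x\<in>F. \<forall>y\<in>P. sleq m x y \<longrightarrow> y \<in> F) \<and> (\<forall>x\<in>F. \<forall>y\<in>F. m x y \<in> F)"
    using A unfolding is_filter_def by blast
next
  assume "F \<noteq> {} \<and> F \<subseteq> P \<and> zr \<notin> F \<and>
     (\<forall>x\<in>F. \<forall>y\<in>P. sleq m x y \<longrightarrow> y \<in> F) \<and> (\<forall>x\<in>F. \<forall>y\<in>F. m x y \<in> F)"
  then show "is_filter P m F" unfolding is_filter_def using zr_in by blast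
qed

lemma filtersD:
  assumes "F \<in> filters P m"
  shows "F \<noteq> {}" "F \<subseteq> P" "zr \<notin> F" "x \<in> F \<Longrightarrow> y \<in> P \<Longrightarrow> sleq m x y \<Longrightarrow> y \<in> F"
    "x \<in> F \<Longrightarrow> y \<in> F \<Longrightarrow> m x y \<in> F"
  using assms unfolding filters_def filter_iff by blast+

lemma filtersI:
  assumes "F \<noteq> {}" "F \<subseteq> P" "zr \<notin> F" "\<And>x y. x \<in> F \<Longrightarrow> y \<in> P \<Longrightarrow> sleq m x y \<Longrightarrow> y \<in> F"
    "\<And>x y. x \<in> F \<Longrightarrow> y \<in> F \<Longrightarrow> m x y \<in> F"
  shows "F \<in> filters P m"
  using assms unfolding filters_def filter_iff by blast

end

locale msl_sub = msl +
  fixes Q :: "'a set"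
  assumes Q_sub: "Q \<subseteq> P" and zr_Q: "zr \<in> Q"
    and down: "x \<in> Q \<Longrightarrow> y \<in> P \<Longrightarrow> sleq m y x \<Longrightarrow> y \<in> Q"
begin

lemma meet_Q: "x \<in> P \<Longrightarrow> e \<in> Q \<Longrightarrow> m x e \<in> Q"
  using down closed meet_le2 Q_sub by blast

sublocale Qs: msl Q m zr
proof
  fix x y w assume "x \<in> Q" "y \<in> Q"
  then show "m x y \<in> Q" using meet_Q Q_sub by blast
  show "m x y = m y x" using comm Q_sub \<open>x \<in> Q\<close> \<open>y \<in> Q\<close> by blast
  assume "w \<in> Q"
  then show "m (m x y) w = m x (m y w)" using assoc Q_sub \<open>x \<in> Q\<close> \<open>y \<in> Q\<close> by blast
next
  fix x assume "x \<in> Q"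
  then show "m x x = x" "m zr x = zr" using idem zr_le Q_sub by blast+
next
  show "zr \<in> Q" by (rule zr_Q)
qed

lemma Q_msl: "msl Q m zr" by (rule Qs.msl_axioms)

lemma up_filter:
  assumes "\<eta> \<in> filters Q m"
  shows "up P m \<eta> \<in> filters P m" "up P m \<eta> \<inter> Q = \<eta>"
proof -
  have eQ: "\<eta> \<subseteq> Q" using Qs.filtersD(2)[OF assms] .
  have eP: "\<eta> \<subseteq> P" using eQ Q_sub by blast
  show "up P m \<eta> \<in> filters P m"
  proof (rule filtersI)
    show "up P m \<eta> \<noteq> {}" using Qs.filtersD(1)[OF assms] eP le_refl unfolding up_def by blast
    show "up P m \<eta> \<subseteq> P" unfolding up_def by blast
    show "zr \<notin> up P m \<eta>"
    proof
      assume "zr \<in> up P m \<eta>"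
      then obtain a where "a \<in> \<eta>" "sleq m a zr" unfolding up_def by blast
      then show False using le_zr eP Qs.filtersD(3)[OF assms] by blast
    qed
    fix x y assume x: "x \<in> up P m \<eta>"
    then obtain a where a: "a \<in> \<eta>" "sleq m a x" "x \<in> P" unfolding up_def by blast
    {
      assume "y \<in> P" "sleq m x y"
      then show "y \<in> up P m \<eta>" using a le_trans eP unfolding up_def by blast
    }
    {
      assume "y \<in> up P m \<eta>"
      then obtain b where b: "b \<in> \<eta>" "sleq m b y" "y \<in> P" unfolding up_def by blast
      have "m a b \<in> \<eta>" using Qs.filtersD(5)[OF assms a(1) b(1)] .
      moreover have "sleq m (m a b) (m x y)"
        using a b eP by (meson closed le_meet le_trans meet_le1 meet_le2 subsetD)
      ultimately show "m x y \<in> up P m \<eta>" using closed a b unfolding up_def by blast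
    }
  qed
  show "up P m \<eta> \<inter> Q = \<eta>"
  proof
    show "\<eta> \<subseteq> up P m \<eta> \<inter> Q" using eQ eP le_refl unfolding up_def by blast
    show "up P m \<eta> \<inter> Q \<subseteq> \<eta>"
      using Qs.filtersD(4)[OF assms] unfolding up_def by blast
  qed
qed

lemma restr_filter:
  assumes F: "F \<in> filters P m" and ne: "F \<inter> Q \<noteq> {}"
  shows "F \<inter> Q \<in> filters Q m" "up P m (F \<inter> Q) = F"
proof -
  show "F \<inter> Q \<in> filters Q m"
  proof (rule Qs.filtersI)
    show "F \<inter> Q \<noteq> {}" by (rule ne)
    show "F \<inter> Q \<subseteq> Q" by blast
    show "zr \<notin> F \<inter> Q" using filtersD(3)[OF F] by blast
    fix x y
    show "x \<in> F \<inter> Q \<Longrightarrow> y \<in> Q \<Longrightarrow> sleq m x y \<Longrightarrow> y \<in> F \<inter> Q"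
      using filtersD(4)[OF F] Q_sub by blast
    show "x \<in> F \<inter> Q \<Longrightarrow> y \<in> F \<inter> Q \<Longrightarrow> m x y \<in> F \<inter> Q"
      using filtersD(5)[OF F] Qs.closed by blast
  qed
  show "up P m (F \<inter> Q) = F"
  proof
    show "up P m (F \<inter> Q) \<subseteq> F" using filtersD(4)[OF F] unfolding up_def by blast
    show "F \<subseteq> up P m (F \<inter> Q)"
    proof
      fix y assume y: "y \<in> F"
      obtain e where e: "e \<in> F" "e \<in> Q" using ne by blast
      have yP: "y \<in> P" using y filtersD(2)[OF F] by blast
      have "m y e \<in> F \<inter> Q" using filtersD(5)[OF F y e(1)] meet_Q[OF yP e(2)] by blast
      moreover have "sleq m (m y e) y" using meet_le1 yP e Q_sub by blast
      ultimately show "y \<in> up P m (F \<inter> Q)" using yP unfolding up_def by blast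
    qed
  qed
qed

lemma restr_ultra:
  assumes U: "U \<in> ultrafilters P m" and ne: "U \<inter> Q \<noteq> {}"
  shows "U \<inter> Q \<in> ultrafilters Q m"
proof -
  have Uf: "U \<in> filters P m" using U ultra_filters by blast
  have "\<forall>F'\<in>filters Q m. U \<inter> Q \<subseteq> F' \<longrightarrow> F' = U \<inter> Q"
  proof (intro ballI impI)
    fix F' assume F': "F' \<in> filters Q m" and sub: "U \<inter> Q \<subseteq> F'"
    have "U \<subseteq> up P m F'"
    proof
      fix u assume u: "u \<in> U"
      obtain e where e: "e \<in> U" "e \<in> Q" using ne by blast
      have uP: "u \<in> P" using u filtersD(2)[OF Uf] by blast
      have "m u e \<in> F'" using filtersD(5)[OF Uf u e(1)] meet_Q[OF uP e(2)] sub by blast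
      moreover have "sleq m (m u e) u" using meet_le1 uP e Q_sub by blast
      ultimately show "u \<in> up P m F'" using uP unfolding up_def by blast
    qed
    then have "up P m F' = U" using U up_filter(1)[OF F'] unfolding ultrafilters_def by blast
    then show "F' = U \<inter> Q" using up_filter(2)[OF F'] by simp
  qed
  then show ?thesis using restr_filter(1)[OF Uf ne] unfolding ultrafilters_def by blast
qed

lemma up_ultra:
  assumes U: "U \<in> ultrafilters Q m"
  shows "up P m U \<in> ultrafilters P m"
proof -
  have Uf: "U \<in> filters Q m" using U ultra_filters by blast
  have "\<forall>F\<in>filters P m. up P m U \<subseteq> F \<longrightarrow> F = up P m U"
  proof (intro ballI impI)
    fix F assume F: "F \<in> filters P m" and sub: "up P m U \<subseteq> F"
    have "U \<subseteq> F \<inter> Q" using sub up_filter(2)[OF Uf] by blast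
    moreover have "U \<noteq> {}" using Qs.filtersD(1)[OF Uf] .
    ultimately have ne: "F \<inter> Q \<noteq> {}" by blast
    then have "F \<inter> Q = U" using U restr_filter(1)[OF F] \<open>U \<subseteq> F \<inter> Q\<close> unfolding ultrafilters_def by blast
    then show "F = up P m U" using restr_filter(2)[OF F ne] by simp
  qed
  then show ?thesis using up_filter(1)[OF Uf] unfolding ultrafilters_def by blast
qed

lemma restr_tight:
  assumes xi: "\<xi> \<in> tight_filters P m" and ne: "\<xi> \<inter> Q \<noteq> {}"
  shows "\<xi> \<inter> Q \<in> tight_filters Q m"
proof -
  have xf: "\<xi> \<in> filters P m" using xi tight_filters_sub[of P m] by blast
  obtain e where e: "e \<in> \<xi>" "e \<in> Q" using ne by blast
  show ?thesis
    unfolding tight_iff[of "\<xi> \<inter> Q"]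
  proof (intro conjI allI impI restr_filter(1)[OF xf ne])
    fix X Y assume XY: "finite X" "finite Y" "X \<subseteq> \<xi> \<inter> Q" "Y \<subseteq> Q" "Y \<inter> (\<xi> \<inter> Q) = {}"
    have h4: "finite (insert e X)" "insert e X \<subseteq> \<xi>" "Y \<subseteq> P" "Y \<inter> \<xi> = {}"
      using XY e Q_sub by auto
    obtain U where U: "U \<in> ultrafilters P m" "insert e X \<subseteq> U" "Y \<inter> U = {}"
      using tightD[OF xi h4(1) XY(2) h4(2-4)] by blast
    have "U \<inter> Q \<in> ultrafilters Q m" using restr_ultra[OF U(1)] U(2) e by blast
    then show "\<exists>U\<in>ultrafilters Q m. X \<subseteq> U \<and> Y \<inter> U = {}"
      by (rule bexI[rotated]) (use U XY in blast)
  qed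
qed

lemma up_tight:
  assumes eta: "\<eta> \<in> tight_filters Q m"
  shows "up P m \<eta> \<in> tight_filters P m"
proof -
  have ef: "\<eta> \<in> filters Q m" using eta tight_filters_sub[of Q m] by blast
  have eQ: "\<eta> \<subseteq> Q" using Qs.filtersD(2)[OF ef] .
  obtain e where e: "e \<in> \<eta>" using Qs.filtersD(1)[OF ef] by blast
  have eQ': "e \<in> Q" using e eQ by blast
  show ?thesis
    unfolding tight_iff[of "up P m \<eta>"]
  proof (intro conjI allI impI up_filter(1)[OF ef])
    fix X Y assume XY: "finite X" "finite Y" "X \<subseteq> up P m \<eta>" "Y \<subseteq> P" "Y \<inter> up P m \<eta> = {}"
    define c where "c x = (SOME a. a \<in> \<eta> \<and> sleq m a x)" for x
    have c: "c x \<in> \<eta> \<and> sleq m (c x) x" if "x \<in> X" for x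
    proof -
      have "\<exists>a. a \<in> \<eta> \<and> sleq m a x" using that XY(3) unfolding up_def by blast
      then show ?thesis unfolding c_def by (rule someI_ex)
    qed
    let ?X = "insert e (c ` X)"
    let ?Y = "(\<lambda>y. m y e) ` Y"
    have Y'Q: "?Y \<subseteq> Q" using XY(4) meet_Q eQ' by blast
    have Ye: "?Y \<inter> \<eta> = {}"
    proof (rule ccontr)
      assume "?Y \<inter> \<eta> \<noteq> {}"
      then obtain y where y: "y \<in> Y" "m y e \<in> \<eta>" by blast
      have "sleq m (m y e) y" using meet_le1 y XY(4) eQ' Q_sub by blast
      then have "y \<in> up P m \<eta>" using y XY(4) unfolding up_def by blast
      then show False using XY(5) y by blast
    qed
    have fX: "finite ?X" "finite ?Y" "?X \<subseteq> \<eta>" using XY c e by auto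
    obtain U' where U': "U' \<in> ultrafilters Q m" "?X \<subseteq> U'" "?Y \<inter> U' = {}"
      using tightD[OF eta fX Y'Q Ye] by blast
    have U'f: "U' \<in> filters Q m" using U'(1) ultra_filters by blast
    have U'Q: "U' \<subseteq> Q" using Qs.filtersD(2)[OF U'f] .
    have "X \<subseteq> up P m U'"
    proof
      fix x assume x: "x \<in> X"
      then have "c x \<in> U'" "sleq m (c x) x" using c U'(2) by auto
      moreover have "x \<in> P" using x XY(3) unfolding up_def by blast
      ultimately show "x \<in> up P m U'" unfolding up_def by blast
    qed
    moreover have "Y \<inter> up P m U' = {}"
    proof (rule ccontr)
      assume "Y \<inter> up P m U' \<noteq> {}"
      then obtain y u where y: "y \<in> Y" "u \<in> U'" "sleq m u y" unfolding up_def by blast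
      have eU: "e \<in> U'" using U'(2) by blast
      have "m u e \<in> U'" using Qs.filtersD(5)[OF U'f y(2) eU] .
      moreover have "sleq m (m u e) (m y e)"
        using meet_mono y XY(4) U'Q eQ' Q_sub by blast
      moreover have "m y e \<in> Q" using Y'Q y by blast
      ultimately have "m y e \<in> U'" using Qs.filtersD(4)[OF U'f] by blast
      then show False using U'(3) y by blast
    qed
    ultimately show "\<exists>U\<in>ultrafilters P m. X \<subseteq> U \<and> Y \<inter> U = {}"
      by (intro bexI[OF _ up_ultra[OF U'(1)]]) blast
  qed
qed

definition "DQ = {F \<in> tight_filters P m. F \<inter> Q \<noteq> {}}"

lemma DQ_open: "openin (tight_topology P m) DQ"
proof -
  have "DQ = \<Union> ((\<lambda>e. {F \<in> tight_filters P m. e \<in> F}) ` Q)"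
  proof (intro equalityI subsetI)
    fix F assume "F \<in> DQ"
    then obtain e where "e \<in> F" "e \<in> Q" "F \<in> tight_filters P m" unfolding DQ_def by blast
    then show "F \<in> \<Union> ((\<lambda>e. {F \<in> tight_filters P m. e \<in> F}) ` Q)" by blast
  next
    fix F assume "F \<in> \<Union> ((\<lambda>e. {F \<in> tight_filters P m. e \<in> F}) ` Q)"
    then show "F \<in> DQ" unfolding DQ_def by blast
  qed
  moreover have "openin (tight_topology P m) (\<Union> ((\<lambda>e. {F \<in> tight_filters P m. e \<in> F}) ` Q))"
  proof (rule openin_Union)
    fix S assume "S \<in> (\<lambda>e. {F \<in> tight_filters P m. e \<in> F}) ` Q"
    then obtain e where "e \<in> Q" "S = {F \<in> tight_filters P m. e \<in> F}" by blast
    then show "openin (tight_topology P m) S" using open_tight_in[of e P m] Q_sub by auto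
  qed
  ultimately show ?thesis by simp
qed

lemma DQ_sub: "DQ \<subseteq> tight_filters P m" unfolding DQ_def by blast

lemma homeo_DQ:
  "homeomorphic_maps (subtopology (tight_topology P m) DQ) (tight_topology Q m) (\<lambda>F. F \<inter> Q) (up P m)"
  unfolding homeomorphic_maps_def
proof (intro conjI)
  have ts: "topspace (subtopology (tight_topology P m) DQ) = DQ"
    using DQ_sub topspace_TT[of P m] by (metis inf.absorb_iff2 topspace_subtopology)
  show "continuous_map (subtopology (tight_topology P m) DQ) (tight_topology Q m) (\<lambda>F. F \<inter> Q)"
  proof (rule cont_into_tight)
    fix \<xi> assume "\<xi> \<in> topspace (subtopology (tight_topology P m) DQ)"
    then show "\<xi> \<inter> Q \<in> tight_filters Q m" using ts restr_tight unfolding DQ_def by blast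
  next
    fix x assume x: "x \<in> Q"
    have "{\<xi> \<in> topspace (subtopology (tight_topology P m) DQ). x \<in> \<xi> \<inter> Q} = DQ \<inter> {F \<in> tight_filters P m. x \<in> F}"
      using ts x DQ_sub by auto
    moreover have "openin (subtopology (tight_topology P m) DQ) (DQ \<inter> {F \<in> tight_filters P m. x \<in> F})"
      using open_tight_in[of x P m] x Q_sub by (intro openin_subtopology_Int2) auto
    ultimately show "openin (subtopology (tight_topology P m) DQ) {\<xi> \<in> topspace (subtopology (tight_topology P m) DQ). x \<in> \<xi> \<inter> Q}"
      by simp
    have "{\<xi> \<in> topspace (subtopology (tight_topology P m) DQ). x \<notin> \<xi> \<inter> Q} = DQ \<inter> {F \<in> tight_filters P m. x \<notin> F}"
      using ts x DQ_sub by auto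
    moreover have "openin (subtopology (tight_topology P m) DQ) (DQ \<inter> {F \<in> tight_filters P m. x \<notin> F})"
      using open_tight_notin[of x P m] x Q_sub by (intro openin_subtopology_Int2) auto
    ultimately show "openin (subtopology (tight_topology P m) DQ) {\<xi> \<in> topspace (subtopology (tight_topology P m) DQ). x \<notin> \<xi> \<inter> Q}"
      by simp
  qed
  have upD: "up P m \<eta> \<in> DQ" if "\<eta> \<in> tight_filters Q m" for \<eta>
  proof -
    have ef: "\<eta> \<in> filters Q m" using that tight_filters_sub[of Q m] by blast
    show ?thesis using up_tight[OF that] up_filter(2)[OF ef] Qs.filtersD(1)[OF ef] unfolding DQ_def by simp
  qed
  have "continuous_map (tight_topology Q m) (tight_topology P m) (up P m)"
  proof (rule cont_into_tight)
    fix \<eta> assume "\<eta> \<in> topspace (tight_topology Q m)"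
    then show "up P m \<eta> \<in> tight_filters P m" using up_tight topspace_TT[of Q m] by blast
  next
    fix x assume x: "x \<in> P"
    have eq1: "{\<eta> \<in> topspace (tight_topology Q m). x \<in> up P m \<eta>} = \<Union> ((\<lambda>e. {\<eta> \<in> tight_filters Q m. m x e \<in> \<eta>}) ` Q)"
    proof (intro equalityI subsetI)
      fix \<eta> assume "\<eta> \<in> {\<eta> \<in> topspace (tight_topology Q m). x \<in> up P m \<eta>}"
      then have et: "\<eta> \<in> tight_filters Q m" and "x \<in> up P m \<eta>" using topspace_TT[of Q m] by auto
      then obtain a where a: "a \<in> \<eta>" "sleq m a x" unfolding up_def by blast
      have aQ: "a \<in> Q" using a et tight_filters_sub[of Q m] Qs.filtersD(2) by blast
      have mxa: "m x a = a" using a(2) comm x aQ Q_sub unfolding sleq_def by auto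
      show "\<eta> \<in> \<Union> ((\<lambda>e. {\<eta> \<in> tight_filters Q m. m x e \<in> \<eta>}) ` Q)"
        by (rule UN_I[OF aQ]) (use et a mxa in simp)
    next
      fix \<eta> assume "\<eta> \<in> \<Union> ((\<lambda>e. {\<eta> \<in> tight_filters Q m. m x e \<in> \<eta>}) ` Q)"
      then obtain e where e: "e \<in> Q" "\<eta> \<in> tight_filters Q m" "m x e \<in> \<eta>" by blast
      have "sleq m (m x e) x" using meet_le1 x e Q_sub by blast
      then show "\<eta> \<in> {\<eta> \<in> topspace (tight_topology Q m). x \<in> up P m \<eta>}"
        using e x topspace_TT[of Q m] unfolding up_def by blast
    qed
    have o1: "openin (tight_topology Q m) {\<eta> \<in> tight_filters Q m. m x e \<in> \<eta>}" if "e \<in> Q" for e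
      using open_tight_in[of "m x e" Q m] meet_Q x that by blast
    show "openin (tight_topology Q m) {\<eta> \<in> topspace (tight_topology Q m). x \<in> up P m \<eta>}"
      unfolding eq1 by (intro openin_Union) (auto intro: o1)
    have eq2: "{\<eta> \<in> topspace (tight_topology Q m). x \<notin> up P m \<eta>} =
       \<Union> ((\<lambda>e. {\<eta> \<in> tight_filters Q m. e \<in> \<eta>} \<inter> {\<eta> \<in> tight_filters Q m. m x e \<notin> \<eta>}) ` Q)"
    proof (intro equalityI subsetI)
      fix \<eta> assume "\<eta> \<in> {\<eta> \<in> topspace (tight_topology Q m). x \<notin> up P m \<eta>}"
      then have et: "\<eta> \<in> tight_filters Q m" and nx: "x \<notin> up P m \<eta>" using topspace_TT[of Q m] by auto
      have ef: "\<eta> \<in> filters Q m" using et tight_filters_sub[of Q m] by blast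
      obtain e where e: "e \<in> \<eta>" using Qs.filtersD(1)[OF ef] by blast
      have eQ: "e \<in> Q" using e Qs.filtersD(2)[OF ef] by blast
      have "m x e \<notin> \<eta>"
      proof
        assume "m x e \<in> \<eta>"
        moreover have "sleq m (m x e) x" using meet_le1 x eQ Q_sub by blast
        ultimately have "x \<in> up P m \<eta>" using x unfolding up_def by blast
        then show False using nx by blast
      qed
      then show "\<eta> \<in> \<Union> ((\<lambda>e. {\<eta> \<in> tight_filters Q m. e \<in> \<eta>} \<inter> {\<eta> \<in> tight_filters Q m. m x e \<notin> \<eta>}) ` Q)"
        using e eQ et by blast
    next
      fix \<eta> assume "\<eta> \<in> \<Union> ((\<lambda>e. {\<eta> \<in> tight_filters Q m. e \<in> \<eta>} \<inter> {\<eta> \<in> tight_filters Q m. m x e \<notin> \<eta>}) ` Q)"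
      then obtain e where e: "e \<in> Q" "\<eta> \<in> tight_filters Q m" "e \<in> \<eta>" "m x e \<notin> \<eta>" by blast
      have ef: "\<eta> \<in> filters Q m" using e tight_filters_sub[of Q m] by blast
      have "x \<notin> up P m \<eta>"
      proof
        assume "x \<in> up P m \<eta>"
        then obtain a where a: "a \<in> \<eta>" "sleq m a x" unfolding up_def by blast
        have aQ: "a \<in> Q" using a Qs.filtersD(2)[OF ef] by blast
        have "m a e \<in> \<eta>" using Qs.filtersD(5)[OF ef a(1) e(3)] .
        moreover have "sleq m (m a e) (m x e)" using meet_mono a aQ e x Q_sub by blast
        moreover have "m x e \<in> Q" using meet_Q x e by blast
        ultimately have "m x e \<in> \<eta>" using Qs.filtersD(4)[OF ef] by blast
        then show False using e by blast
      qed
      then show "\<eta> \<in> {\<eta> \<in> topspace (tight_topology Q m). x \<notin> up P m \<eta>}" using e topspace_TT[of Q m] by blast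
    qed
    have o2: "openin (tight_topology Q m) ({\<eta> \<in> tight_filters Q m. e \<in> \<eta>} \<inter> {\<eta> \<in> tight_filters Q m. m x e \<notin> \<eta>})" if "e \<in> Q" for e
      using open_tight_in[of e Q m] open_tight_notin[of "m x e" Q m] meet_Q x that by (intro openin_Int) blast+
    show "openin (tight_topology Q m) {\<eta> \<in> topspace (tight_topology Q m). x \<notin> up P m \<eta>}"
      unfolding eq2 by (intro openin_Union) (auto intro: o2)
  qed
  then show "continuous_map (tight_topology Q m) (subtopology (tight_topology P m) DQ) (up P m)"
    unfolding continuous_map_in_subtopology using upD topspace_TT[of Q m] by (metis Pi_I)
  show "\<forall>\<xi>\<in>topspace (subtopology (tight_topology P m) DQ). up P m (\<xi> \<inter> Q) = \<xi>"
    using ts restr_filter(2) tight_filters_sub[of P m] unfolding DQ_def by blast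
  show "\<forall>\<eta>\<in>topspace (tight_topology Q m). up P m \<eta> \<inter> Q = \<eta>"
    using up_filter(2) tight_filters_sub[of Q m] topspace_TT[of Q m] by blast
qed

end

locale msl_iso =
  A: msl P m zr + B: msl P' m zr for P P' m zr +
  fixes h h' :: "'a \<Rightarrow> 'a"
  assumes h_into: "x \<in> P \<Longrightarrow> h x \<in> P'" and h'_into: "y \<in> P' \<Longrightarrow> h' y \<in> P"
    and hh': "x \<in> P \<Longrightarrow> h' (h x) = x" and h'h: "y \<in> P' \<Longrightarrow> h (h' y) = y"
    and h_mono: "x \<in> P \<Longrightarrow> y \<in> P \<Longrightarrow> sleq m x y \<Longrightarrow> sleq m (h x) (h y)"
    and h'_mono: "x \<in> P' \<Longrightarrow> y \<in> P' \<Longrightarrow> sleq m x y \<Longrightarrow> sleq m (h' x) (h' y)"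
begin

lemma h_refl: "x \<in> P \<Longrightarrow> y \<in> P \<Longrightarrow> sleq m (h x) (h y) \<Longrightarrow> sleq m x y"
  using h'_mono h_into hh' by metis

lemma h_hom: "x \<in> P \<Longrightarrow> y \<in> P \<Longrightarrow> h (m x y) = m (h x) (h y)"
proof -
  assume x: "x \<in> P" and y: "y \<in> P"
  have xy: "m x y \<in> P" using A.closed x y by blast
  have 1: "sleq m (h (m x y)) (m (h x) (h y))"
    using B.le_meet h_into h_mono A.meet_le1 A.meet_le2 x y xy B.closed by metis
  have "sleq m (h' (m (h x) (h y))) (m x y)"
  proof -
    have hxy: "m (h x) (h y) \<in> P'" using B.closed h_into x y by blast
    have "sleq m (h' (m (h x) (h y))) (h' (h x))" using h'_mono[OF hxy _ B.meet_le1] h_into x y by blast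
    moreover have "sleq m (h' (m (h x) (h y))) (h' (h y))" using h'_mono[OF hxy _ B.meet_le2] h_into x y by blast
    ultimately show ?thesis using A.le_meet hh' x y h'_into hxy by metis
  qed
  then have 2: "sleq m (m (h x) (h y)) (h (m x y))"
    using h_mono h'h h'_into B.closed h_into x y xy by metis
  show ?thesis using B.le_antisym 1 2 h_into xy B.closed x y by metis
qed

lemma img_filter:
  assumes F: "F \<in> filters P m"
  shows "h ` F \<in> filters P' m"
proof (rule B.filtersI)
  have FP: "F \<subseteq> P" using A.filtersD(2)[OF F] .
  show "h ` F \<noteq> {}" using A.filtersD(1)[OF F] by blast
  show "h ` F \<subseteq> P'" using FP h_into by blast
  show "zr \<notin> h ` F"
  proof
    assume "zr \<in> h ` F"
    then obtain a where a: "a \<in> F" "h a = zr" by blast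
    have aP: "a \<in> P" using a FP by blast
    have "sleq m a x" if "x \<in> P" for x
      using h_refl[OF aP that] B.zr_least h_into that a by simp
    then have "P \<subseteq> F" using A.filtersD(4)[OF F a(1)] by blast
    then show False using A.filtersD(3)[OF F] A.zr_in by blast
  qed
  fix x y
  show "x \<in> h ` F \<Longrightarrow> y \<in> P' \<Longrightarrow> sleq m x y \<Longrightarrow> y \<in> h ` F"
  proof -
    assume x: "x \<in> h ` F" and y: "y \<in> P'" and xy: "sleq m x y"
    obtain a where a: "a \<in> F" "x = h a" using x by blast
    have aP: "a \<in> P" using a FP by blast
    have "sleq m (h' x) (h' y)" using h'_mono xy y a aP h_into by blast
    then have "sleq m a (h' y)" using hh' aP a by simp
    then have "h' y \<in> F" using A.filtersD(4)[OF F a(1)] h'_into y by blast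
    then show "y \<in> h ` F" using h'h y by force
  qed
  show "x \<in> h ` F \<Longrightarrow> y \<in> h ` F \<Longrightarrow> m x y \<in> h ` F"
  proof -
    assume "x \<in> h ` F" "y \<in> h ` F"
    then obtain a b where ab: "a \<in> F" "b \<in> F" "x = h a" "y = h b" by blast
    then have "a \<in> P" "b \<in> P" using FP by auto
    then have "m x y = h (m a b)" using h_hom[of a b] ab by simp
    then show "m x y \<in> h ` F" using A.filtersD(5)[OF F ab(1,2)] by blast
  qed
qed

end

lemma msl_iso_swap:
  assumes "msl_iso P P' m zr h h'" shows "msl_iso P' P m zr h' h"
proof -
  interpret msl_iso P P' m zr h h' by (rule assms)
  show ?thesis
    apply (rule msl_iso.intro[OF B.msl_axioms A.msl_axioms])
    apply (rule msl_iso_axioms.intro)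
    using h_into h'_into hh' h'h h_mono h'_mono by auto
qed

context msl_iso begin

lemma swap: "msl_iso P' P m zr h' h"
  by (rule msl_iso_swap[OF msl_iso_axioms])

lemma img_img: "F \<subseteq> P \<Longrightarrow> h' ` h ` F = F"
  using hh' by (force simp: image_image)

lemma img_img': "F \<subseteq> P' \<Longrightarrow> h ` h' ` F = F"
  using h'h by (force simp: image_image)

lemma img_ultra:
  assumes U: "U \<in> ultrafilters P m"
  shows "h ` U \<in> ultrafilters P' m"
proof -
  have Uf: "U \<in> filters P m" using U ultra_filters by blast
  have "\<forall>F'\<in>filters P' m. h ` U \<subseteq> F' \<longrightarrow> F' = h ` U"
  proof (intro ballI impI)
    fix F' assume F': "F' \<in> filters P' m" and sub: "h ` U \<subseteq> F'"
    have "h' ` F' \<in> filters P m" using msl_iso.img_filter[OF swap F'] .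
    moreover have "U \<subseteq> h' ` F'" using sub img_img A.filtersD(2)[OF Uf] by blast
    ultimately have "h' ` F' = U" using U unfolding ultrafilters_def by blast
    then show "F' = h ` U" using img_img' B.filtersD(2)[OF F'] by blast
  qed
  then show ?thesis using img_filter[OF Uf] unfolding ultrafilters_def by blast
qed

lemma img_tight:
  assumes xi: "\<xi> \<in> tight_filters P m"
  shows "h ` \<xi> \<in> tight_filters P' m"
proof -
  have xf: "\<xi> \<in> filters P m" using xi tight_filters_sub by blast
  have xP: "\<xi> \<subseteq> P" using A.filtersD(2)[OF xf] .
  show ?thesis
    unfolding tight_iff[of "h ` \<xi>"]
  proof (intro conjI allI impI img_filter[OF xf])
    fix X Y assume XY: "finite X" "finite Y" "X \<subseteq> h ` \<xi>" "Y \<subseteq> P'" "Y \<inter> h ` \<xi> = {}"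
    have X': "h' ` X \<subseteq> \<xi>"
    proof
      fix w assume "w \<in> h' ` X"
      then obtain x where "x \<in> X" "w = h' x" by blast
      then obtain a where "a \<in> \<xi>" "x = h a" using XY(3) by blast
      then show "w \<in> \<xi>" using hh' xP \<open>w = h' x\<close> by auto
    qed
    have Y': "h' ` Y \<subseteq> P" using XY(4) h'_into by blast
    have Y'': "h' ` Y \<inter> \<xi> = {}"
    proof (rule ccontr)
      assume "h' ` Y \<inter> \<xi> \<noteq> {}"
      then obtain y where "y \<in> Y" "h' y \<in> \<xi>" by blast
      then have "y \<in> h ` \<xi>" using h'h XY(4) by force
      then show False using XY(5) \<open>y \<in> Y\<close> by blast
    qed
    have fin: "finite (h' ` X)" "finite (h' ` Y)" using XY by auto
    obtain U where U: "U \<in> ultrafilters P m" "h' ` X \<subseteq> U" "h' ` Y \<inter> U = {}"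
      using tightD[OF xi fin X' Y' Y''] by blast
    have UP: "U \<subseteq> P" using U(1) ultra_filters A.filtersD(2) by blast
    have "X \<subseteq> h ` U"
    proof
      fix x assume "x \<in> X"
      then have "h' x \<in> U" "x \<in> P'" using U(2) XY(3) xP h_into by auto
      then show "x \<in> h ` U" using h'h by force
    qed
    moreover have "Y \<inter> h ` U = {}"
    proof (rule ccontr)
      assume "Y \<inter> h ` U \<noteq> {}"
      then obtain u where "u \<in> U" "h u \<in> Y" by blast
      then have "h' (h u) \<in> h' ` Y \<inter> U" using hh' UP by auto
      then show False using U(3) by blast
    qed
    ultimately show "\<exists>U\<in>ultrafilters P' m. X \<subseteq> U \<and> Y \<inter> U = {}"
      by (intro bexI[OF _ img_ultra[OF U(1)]]) blast
  qed
qed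

lemma img_cont: "continuous_map (tight_topology P m) (tight_topology P' m) (\<lambda>F. h ` F)"
proof (rule cont_into_tight)
  fix \<xi> assume "\<xi> \<in> topspace (tight_topology P m)"
  then show "h ` \<xi> \<in> tight_filters P' m" using img_tight topspace_TT by blast
next
  fix x assume x: "x \<in> P'"
  have "{\<xi> \<in> topspace (tight_topology P m). x \<in> h ` \<xi>} = {F \<in> tight_filters P m. h' x \<in> F}"
  proof (intro equalityI subsetI)
    fix \<xi> assume "\<xi> \<in> {\<xi> \<in> topspace (tight_topology P m). x \<in> h ` \<xi>}"
    then have "\<xi> \<in> tight_filters P m" "x \<in> h ` \<xi>" using topspace_TT by auto
    moreover then have "\<xi> \<subseteq> P" using tight_filters_sub A.filtersD(2) by blast
    ultimately show "\<xi> \<in> {F \<in> tight_filters P m. h' x \<in> F}" using hh' by auto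
  next
    fix \<xi> assume "\<xi> \<in> {F \<in> tight_filters P m. h' x \<in> F}"
    then show "\<xi> \<in> {\<xi> \<in> topspace (tight_topology P m). x \<in> h ` \<xi>}"
      using topspace_TT h'h x by force
  qed
  then show "openin (tight_topology P m) {\<xi> \<in> topspace (tight_topology P m). x \<in> h ` \<xi>}"
    using open_tight_in[of "h' x" P m] h'_into[OF x] by simp
  have "{\<xi> \<in> topspace (tight_topology P m). x \<notin> h ` \<xi>} = {F \<in> tight_filters P m. h' x \<notin> F}"
  proof (intro equalityI subsetI)
    fix \<xi> assume "\<xi> \<in> {\<xi> \<in> topspace (tight_topology P m). x \<notin> h ` \<xi>}"
    then show "\<xi> \<in> {F \<in> tight_filters P m. h' x \<notin> F}"
      using topspace_TT h'h x by force
  next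
    fix \<xi> assume a: "\<xi> \<in> {F \<in> tight_filters P m. h' x \<notin> F}"
    then have "\<xi> \<subseteq> P" using tight_filters_sub A.filtersD(2) by blast
    then show "\<xi> \<in> {\<xi> \<in> topspace (tight_topology P m). x \<notin> h ` \<xi>}"
      using a topspace_TT hh' by auto
  qed
  then show "openin (tight_topology P m) {\<xi> \<in> topspace (tight_topology P m). x \<notin> h ` \<xi>}"
    using open_tight_notin[of "h' x" P m] h'_into[OF x] by simp
qed

end

lemma img_homeo:
  assumes I: "msl_iso P P' m zr h h'"
  shows "homeomorphic_maps (tight_topology P m) (tight_topology P' m) (\<lambda>F. h ` F) (\<lambda>F. h' ` F)"
proof -
  interpret I1: msl_iso P P' m zr h h' by (rule I)
  interpret I2: msl_iso P' P m zr h' h by (rule msl_iso_swap[OF I])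
  have c1: "continuous_map (tight_topology P m) (tight_topology P' m) (\<lambda>F. h ` F)" by (rule I1.img_cont)
  have c2: "continuous_map (tight_topology P' m) (tight_topology P m) (\<lambda>F. h' ` F)" by (rule I2.img_cont)
  have i1: "\<forall>F\<in>topspace (tight_topology P m). h' ` h ` F = F"
  proof
    fix F assume "F \<in> topspace (tight_topology P m)"
    then have "F \<in> filters P m" using topspace_TT[of P m] tight_filters_sub[of P m] by blast
    then have "F \<subseteq> P" by (rule I1.A.filtersD(2))
    then show "h' ` h ` F = F" by (rule I1.img_img)
  qed
  have i2: "\<forall>F\<in>topspace (tight_topology P' m). h ` h' ` F = F"
  proof
    fix F assume "F \<in> topspace (tight_topology P' m)"
    then have "F \<in> filters P' m" using topspace_TT[of P' m] tight_filters_sub[of P' m] by blast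
    then have "F \<subseteq> P'" by (rule I1.B.filtersD(2))
    then show "h ` h' ` F = F" by (rule I1.img_img')
  qed
  show ?thesis unfolding homeomorphic_maps_def using c1 c2 i1 i2 by blast
qed

locale invsg =
  fixes sm :: "'a \<Rightarrow> 'a \<Rightarrow> 'a" (infixl "\<cdot>" 70) and z :: 'a
  assumes isz: "inverse_semigroup_zero sm z"
begin

abbreviation sr :: "'a \<Rightarrow> 'a" where "sr a \<equiv> istar sm a"

lemma sassoc [simp]: "(a \<cdot> b) \<cdot> c = a \<cdot> (b \<cdot> c)"
  using isz unfolding inverse_semigroup_zero_def by blast

lemma ex1: "\<exists>!t. a \<cdot> t \<cdot> a = a \<and> t \<cdot> a \<cdot> t = t"
  using isz unfolding inverse_semigroup_zero_def by blast

lemma zl [simp]: "z \<cdot> a = z" and zr [simp]: "a \<cdot> z = z"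
  using isz unfolding inverse_semigroup_zero_def by blast+

lemma st_both: "a \<cdot> sr a \<cdot> a = a \<and> sr a \<cdot> a \<cdot> sr a = sr a"
  unfolding istar_def by (rule theI'[OF ex1])

lemma st1 [simp]: "a \<cdot> (sr a \<cdot> a) = a" using st_both by simp
lemma st2 [simp]: "sr a \<cdot> (a \<cdot> sr a) = sr a" using st_both by simp
lemma st1' [simp]: "a \<cdot> (sr a \<cdot> (a \<cdot> w)) = a \<cdot> w"
  by (metis sassoc st1)
lemma st2' [simp]: "sr a \<cdot> (a \<cdot> (sr a \<cdot> w)) = sr a \<cdot> w"
  by (metis sassoc st2)

lemma st_uniq: "a \<cdot> t \<cdot> a = a \<Longrightarrow> t \<cdot> a \<cdot> t = t \<Longrightarrow> t = sr a"
  unfolding istar_def by (rule the1_equality[OF ex1, symmetric]) blast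

lemma sr_sr [simp]: "sr (sr a) = a"
  by (rule st_uniq[symmetric]) simp_all

lemma idem_sr: "e \<cdot> e = e \<Longrightarrow> sr e = e"
  by (rule st_uniq[symmetric]) simp_all

lemma idem_l: "e \<cdot> e = e \<Longrightarrow> e \<cdot> (e \<cdot> w) = e \<cdot> w"
  by (metis sassoc)

lemma ide_mult: assumes e: "e \<cdot> e = e" and f: "f \<cdot> f = f" shows "(e \<cdot> f) \<cdot> (e \<cdot> f) = e \<cdot> f"
proof -
  define a where "a = sr (e \<cdot> f)"
  have a1: "e \<cdot> (f \<cdot> (a \<cdot> (e \<cdot> f))) = e \<cdot> f" unfolding a_def using st1[of "e \<cdot> f"] by (simp only: sassoc)
  have a2: "a \<cdot> (e \<cdot> (f \<cdot> a)) = a" unfolding a_def using st2[of "e \<cdot> f"] by (simp only: sassoc)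
  have "f \<cdot> a \<cdot> e = sr (e \<cdot> f)"
  proof (rule st_uniq)
    have "e \<cdot> f \<cdot> (f \<cdot> a \<cdot> e) \<cdot> (e \<cdot> f) = e \<cdot> (f \<cdot> f) \<cdot> a \<cdot> (e \<cdot> e) \<cdot> f" by simp
    also have "\<dots> = e \<cdot> f" using e f a1 by simp
    finally show "e \<cdot> f \<cdot> (f \<cdot> a \<cdot> e) \<cdot> (e \<cdot> f) = e \<cdot> f" .
    have "f \<cdot> a \<cdot> e \<cdot> (e \<cdot> f) \<cdot> (f \<cdot> a \<cdot> e) = f \<cdot> (a \<cdot> (e \<cdot> e) \<cdot> (f \<cdot> f) \<cdot> a) \<cdot> e" by simp
    also have "\<dots> = f \<cdot> a \<cdot> e" using e f a2 by simp
    finally show "f \<cdot> a \<cdot> e \<cdot> (e \<cdot> f) \<cdot> (f \<cdot> a \<cdot> e) = f \<cdot> a \<cdot> e" .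
  qed
  then have b: "f \<cdot> a \<cdot> e = a" unfolding a_def by simp
  have "a \<cdot> a = f \<cdot> a \<cdot> e \<cdot> (f \<cdot> a \<cdot> e)" using b by simp
  also have "\<dots> = f \<cdot> (a \<cdot> (e \<cdot> (f \<cdot> a))) \<cdot> e" by simp
  also have "\<dots> = a" using a2 b by simp
  finally have "a \<cdot> a = a" .
  then have "sr a = a" by (rule idem_sr)
  then have "e \<cdot> f = a" unfolding a_def by simp
  then show ?thesis using \<open>a \<cdot> a = a\<close> by simp
qed

lemma ide_comm: assumes e: "e \<cdot> e = e" and f: "f \<cdot> f = f" shows "e \<cdot> f = f \<cdot> e"
proof -
  have ef: "(e \<cdot> f) \<cdot> (e \<cdot> f) = e \<cdot> f" and fe: "(f \<cdot> e) \<cdot> (f \<cdot> e) = f \<cdot> e"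
    using ide_mult e f by blast+
  have "f \<cdot> e = sr (e \<cdot> f)"
  proof (rule st_uniq)
    have "e \<cdot> f \<cdot> (f \<cdot> e) \<cdot> (e \<cdot> f) = (e \<cdot> f) \<cdot> (e \<cdot> f)" using e f by (simp add: idem_l)
    then show "e \<cdot> f \<cdot> (f \<cdot> e) \<cdot> (e \<cdot> f) = e \<cdot> f" using ef by simp
    have "f \<cdot> e \<cdot> (e \<cdot> f) \<cdot> (f \<cdot> e) = (f \<cdot> e) \<cdot> (f \<cdot> e)" using e f by (simp add: idem_l)
    then show "f \<cdot> e \<cdot> (e \<cdot> f) \<cdot> (f \<cdot> e) = f \<cdot> e" using fe by simp
  qed
  then show ?thesis using idem_sr[OF ef] by simp
qed

lemma ide_comm': "e \<cdot> e = e \<Longrightarrow> f \<cdot> f = f \<Longrightarrow> e \<cdot> (f \<cdot> w) = f \<cdot> (e \<cdot> w)"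
  by (metis ide_comm sassoc)

lemma aa_ide: "(a \<cdot> sr a) \<cdot> (a \<cdot> sr a) = a \<cdot> sr a" by simp
lemma aa_ide': "(sr a \<cdot> a) \<cdot> (sr a \<cdot> a) = sr a \<cdot> a" by simp

lemma sr_mult: "sr (a \<cdot> b) = sr b \<cdot> sr a"
proof (rule st_uniq[symmetric])
  have c: "(b \<cdot> sr b) \<cdot> (sr a \<cdot> a) = (sr a \<cdot> a) \<cdot> (b \<cdot> sr b)"
    by (rule ide_comm) simp_all
  have "a \<cdot> b \<cdot> (sr b \<cdot> sr a) \<cdot> (a \<cdot> b) = a \<cdot> ((b \<cdot> sr b) \<cdot> (sr a \<cdot> a)) \<cdot> b" by simp
  also have "\<dots> = a \<cdot> ((sr a \<cdot> a) \<cdot> (b \<cdot> sr b)) \<cdot> b" using c by simp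
  also have "\<dots> = a \<cdot> b" by simp
  finally show "a \<cdot> b \<cdot> (sr b \<cdot> sr a) \<cdot> (a \<cdot> b) = a \<cdot> b" .
  have "sr b \<cdot> sr a \<cdot> (a \<cdot> b) \<cdot> (sr b \<cdot> sr a) = sr b \<cdot> ((sr a \<cdot> a) \<cdot> (b \<cdot> sr b)) \<cdot> sr a" by simp
  also have "\<dots> = sr b \<cdot> ((b \<cdot> sr b) \<cdot> (sr a \<cdot> a)) \<cdot> sr a" using c by simp
  also have "\<dots> = sr b \<cdot> sr a" by simp
  finally show "sr b \<cdot> sr a \<cdot> (a \<cdot> b) \<cdot> (sr b \<cdot> sr a) = sr b \<cdot> sr a" .
qed

abbreviation E where "E \<equiv> idems sm"

lemma E_iff: "x \<in> E \<longleftrightarrow> x \<cdot> x = x" unfolding idems_def by simp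

lemma z_E: "z \<in> E" by (simp add: E_iff)

lemma E_msl: "msl E sm z"
proof
  fix x y w assume x: "x \<in> E" and y: "y \<in> E"
  show "x \<cdot> y \<in> E" using ide_mult x y E_iff by blast
  show "x \<cdot> y = y \<cdot> x" using ide_comm x y E_iff by blast
  show "x \<cdot> y \<cdot> w = x \<cdot> (y \<cdot> w)" by simp
next
  fix x assume "x \<in> E" then show "x \<cdot> x = x" "z \<cdot> x = z" using E_iff by auto
next
  show "z \<in> E" by (rule z_E)
qed

lemma sr_E: "x \<in> E \<Longrightarrow> sr x = x" using idem_sr E_iff by blast

lemma nz_l: "a \<cdot> b \<noteq> z \<Longrightarrow> a \<noteq> z" by auto
lemma nz_r: "a \<cdot> b \<noteq> z \<Longrightarrow> b \<noteq> z" by auto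

lemma sr_nz: "a \<noteq> z \<Longrightarrow> sr a \<noteq> z"
  by (metis st1 zl zr)

lemma asr_nz: "a \<noteq> z \<Longrightarrow> a \<cdot> sr a \<noteq> z"
  by (metis st1 sassoc zl)

end

locale graded = invsg +
  fixes G :: "('g, 'b) monoid_scheme" and \<phi> :: "'a \<Rightarrow> 'g"
  assumes grp: "group G" and pg: "pure_grading sm z G \<phi>"
begin

sublocale G: group G by (rule grp)

abbreviation Eg' where "Eg' g \<equiv> Eg sm z \<phi> g"
abbreviation ph where "ph g \<equiv> phig sm z \<phi> g"

lemma phi_carrier: "s \<noteq> z \<Longrightarrow> \<phi> s \<in> carrier G"
  using pg unfolding pure_grading_def by blast

lemma phi_mult: "a \<noteq> z \<Longrightarrow> b \<noteq> z \<Longrightarrow> a \<cdot> b \<noteq> z \<Longrightarrow> \<phi> (a \<cdot> b) = \<phi> a \<otimes>\<^bsub>G\<^esub> \<phi> b"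
  using pg unfolding pure_grading_def by blast

lemma phi_E: "s \<noteq> z \<Longrightarrow> s \<in> E \<Longrightarrow> \<phi> s = \<one>\<^bsub>G\<^esub>"
proof -
  assume "s \<noteq> z" "s \<in> E"
  then have "s \<in> idems sm - {z}" by blast
  then show ?thesis using pg unfolding pure_grading_def by blast
qed

lemma phi_one_E: "s \<noteq> z \<Longrightarrow> \<phi> s = \<one>\<^bsub>G\<^esub> \<Longrightarrow> s \<in> E"
proof -
  assume "s \<noteq> z" "\<phi> s = \<one>\<^bsub>G\<^esub>"
  then have "s \<in> {s. s \<noteq> z \<and> \<phi> s = \<one>\<^bsub>G\<^esub>}" by blast
  then show ?thesis using pg unfolding pure_grading_def by blast
qed

lemma phi_sr: assumes a: "a \<noteq> z" shows "\<phi> (sr a) = inv\<^bsub>G\<^esub> (\<phi> a)"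
proof -
  have n: "a \<cdot> sr a \<noteq> z" using asr_nz[OF a] .
  have e: "a \<cdot> sr a \<in> E" using E_iff aa_ide by blast
  have "\<phi> (a \<cdot> sr a) = \<one>\<^bsub>G\<^esub>" using phi_E[OF n e] .
  moreover have "\<phi> (a \<cdot> sr a) = \<phi> a \<otimes>\<^bsub>G\<^esub> \<phi> (sr a)" using phi_mult[OF a sr_nz[OF a] n] .
  ultimately have "\<phi> a \<otimes>\<^bsub>G\<^esub> \<phi> (sr a) = \<one>\<^bsub>G\<^esub>" by simp
  moreover have c1: "\<phi> a \<in> carrier G" by (rule phi_carrier[OF a])
  moreover have c2: "\<phi> (sr a) \<in> carrier G" by (rule phi_carrier[OF sr_nz[OF a]])
  ultimately have "\<phi> (sr a) \<otimes>\<^bsub>G\<^esub> \<phi> a = \<one>\<^bsub>G\<^esub>"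
    by (rule G.inv_comm)
  then have "inv\<^bsub>G\<^esub> (\<phi> a) = \<phi> (sr a)" by (rule G.inv_equality[OF _ c1 c2])
  then show ?thesis by simp
qed

lemma Eg_cases:
  "Eg' g = (if (\<exists>s. s \<noteq> z \<and> \<phi> s = g)
      then {x \<in> E. \<exists>s. s \<noteq> z \<and> \<phi> s = g \<and> x \<cdot> (s \<cdot> sr s) = x}
      else {z})"
  unfolding Eg_def sleq_def by (auto simp del: sassoc)

lemma Eg_z: "z \<in> Eg' g"
  unfolding Eg_cases using z_E by auto

lemma Eg_E: "Eg' g \<subseteq> E"
  unfolding Eg_cases using z_E by auto

lemma Eg_intro: "s \<noteq> z \<Longrightarrow> \<phi> s = g \<Longrightarrow> x \<in> E \<Longrightarrow> x \<cdot> (s \<cdot> sr s) = x \<Longrightarrow> x \<in> Eg' g"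
  unfolding Eg_cases by auto

lemma Eg_elim: "x \<in> Eg' g \<Longrightarrow> x \<noteq> z \<Longrightarrow> \<exists>s. s \<noteq> z \<and> \<phi> s = g \<and> x \<cdot> (s \<cdot> sr s) = x"
  unfolding Eg_cases by (auto split: if_splits)

lemma Eg_down: assumes x: "x \<in> Eg' g" and y: "y \<in> E" and yx: "y \<cdot> x = y" shows "y \<in> Eg' g"
proof (cases "y = z")
  case True then show ?thesis using Eg_z by simp
next
  case False
  then have "x \<noteq> z" using yx by auto
  then obtain s where s: "s \<noteq> z" "\<phi> s = g" "x \<cdot> (s \<cdot> sr s) = x" using Eg_elim[OF x] by blast
  have "y \<cdot> (s \<cdot> sr s) = y \<cdot> x \<cdot> (s \<cdot> sr s)" using yx by simp
  also have "\<dots> = y" using s(3) yx by (metis sassoc)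
  finally show ?thesis by (rule Eg_intro[OF s(1,2) y])
qed

lemma Eg_inv_elim:
  assumes g: "g \<in> carrier G" and x: "x \<in> Eg' (inv\<^bsub>G\<^esub> g)" and xz: "x \<noteq> z"
  shows "\<exists>s. s \<noteq> z \<and> \<phi> s = g \<and> x \<cdot> (sr s \<cdot> s) = x"
proof -
  obtain t where t: "t \<noteq> z" "\<phi> t = inv\<^bsub>G\<^esub> g" "x \<cdot> (t \<cdot> sr t) = x" using Eg_elim[OF x xz] by blast
  have "\<phi> (sr t) = g" using phi_sr[OF t(1)] t(2) g by simp
  moreover have "sr t \<noteq> z" using sr_nz[OF t(1)] .
  moreover have "x \<cdot> (sr (sr t) \<cdot> sr t) = x" using t(3) by simp
  ultimately show ?thesis by blast
qed

lemma Eg_inv_intro: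
  assumes s: "s \<noteq> z" "\<phi> s = g" and x: "x \<in> E" "x \<cdot> (sr s \<cdot> s) = x"
  shows "x \<in> Eg' (inv\<^bsub>G\<^esub> g)"
proof (rule Eg_intro)
  show "sr s \<noteq> z" using sr_nz[OF s(1)] .
  show "\<phi> (sr s) = inv\<^bsub>G\<^esub> g" using phi_sr[OF s(1)] s(2) by simp
  show "x \<in> E" by (rule x(1))
  show "x \<cdot> (sr s \<cdot> sr (sr s)) = x" using x(2) by simp
qed

lemma Eg_one: "Eg' \<one>\<^bsub>G\<^esub> = E"
proof
  show "Eg' \<one>\<^bsub>G\<^esub> \<subseteq> E" by (rule Eg_E)
  show "E \<subseteq> Eg' \<one>\<^bsub>G\<^esub>"
  proof
    fix x assume x: "x \<in> E"
    show "x \<in> Eg' \<one>\<^bsub>G\<^esub>"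
    proof (cases "x = z")
      case True then show ?thesis using Eg_z by simp
    next
      case False
      have xx: "x \<cdot> x = x" using x E_iff by blast
      show ?thesis
      proof (rule Eg_intro[of x])
        show "x \<noteq> z" by (rule False)
        show "\<phi> x = \<one>\<^bsub>G\<^esub>" using phi_E False x by blast
        show "x \<in> E" by (rule x)
        show "x \<cdot> (x \<cdot> sr x) = x" using sr_E[OF x] xx by (simp add: idem_l)
      qed
    qed
  qed
qed

lemma phig_z: "ph g z = z"
  unfolding phig_def Let_def by simp

lemma phig_eq:
  assumes s: "s \<noteq> z" "\<phi> s = g" and x: "x \<in> E" "x \<cdot> (sr s \<cdot> s) = x"
  shows "ph g x = s \<cdot> (x \<cdot> sr s)"
proof -
  define t where "t = (SOME t. t \<noteq> z \<and> \<phi> t = g \<and> sleq sm x (sr t \<cdot> t))"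
  have ex: "\<exists>t. t \<noteq> z \<and> \<phi> t = g \<and> sleq sm x (sr t \<cdot> t)"
    using s x unfolding sleq_def by (intro exI[of _ s]) simp
  have "t \<noteq> z \<and> \<phi> t = g \<and> sleq sm x (sr t \<cdot> t)" unfolding t_def by (rule someI_ex[OF ex])
  then have t: "t \<noteq> z" "\<phi> t = g" "x \<cdot> (sr t \<cdot> t) = x" unfolding sleq_def by auto
  have ph: "ph g x = t \<cdot> (x \<cdot> sr t)" unfolding phig_def t_def Let_def by simp
  show ?thesis
  proof (cases "x = z")
    case True then show ?thesis using ph by simp
  next
    case False
    have xx: "x \<cdot> x = x" using x E_iff by blast
    have xxw: "x \<cdot> (x \<cdot> w) = x \<cdot> w" for w using xx by (metis sassoc)
    have xs: "x \<cdot> (sr s \<cdot> (s \<cdot> w)) = x \<cdot> w" for w using x(2) by (metis sassoc)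
    have xt: "x \<cdot> (sr t \<cdot> (t \<cdot> w)) = x \<cdot> w" for w using t(3) by (metis sassoc)
    have ssx: "sr s \<cdot> (s \<cdot> x) = x"
    proof -
      have "(sr s \<cdot> s) \<cdot> x = x \<cdot> (sr s \<cdot> s)" by (rule ide_comm) (simp_all add: xx)
      then show ?thesis using x(2) by simp
    qed
    define c where "c = s \<cdot> (x \<cdot> sr t)"
    define d where "d = t \<cdot> (x \<cdot> sr s)"
    have cd: "c \<cdot> d = s \<cdot> (x \<cdot> sr s)" unfolding c_def d_def by (simp add: xt xxw)
    have dc: "d \<cdot> c = t \<cdot> (x \<cdot> sr t)" unfolding c_def d_def by (simp add: xs xxw)
    have nz: "s \<cdot> (x \<cdot> sr s) \<noteq> z"
    proof
      assume "s \<cdot> (x \<cdot> sr s) = z"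
      then have "sr s \<cdot> (s \<cdot> (x \<cdot> (sr s \<cdot> s))) = z" by (metis sassoc zl zr)
      then show False using x(2) ssx False by simp
    qed
    have cz: "c \<noteq> z" using nz cd by auto
    have sxz: "s \<cdot> x \<noteq> z" using cz unfolding c_def by (metis sassoc zl)
    have gc: "g \<in> carrier G" using phi_carrier s by blast
    have "\<phi> (s \<cdot> x) = g" using phi_mult[OF s(1) False sxz] phi_E[OF False x(1)] s(2) gc by simp
    moreover have "\<phi> (s \<cdot> x \<cdot> sr t) = \<phi> (s \<cdot> x) \<otimes>\<^bsub>G\<^esub> \<phi> (sr t)"
      using phi_mult[OF sxz sr_nz[OF t(1)]] cz unfolding c_def by simp
    ultimately have "\<phi> c = \<one>\<^bsub>G\<^esub>" using phi_sr[OF t(1)] t(2) gc unfolding c_def by simp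
    then have cE: "c \<in> E" using phi_one_E cz by blast
    have "sr c = d" unfolding c_def d_def by (simp add: sr_mult sr_E[OF x(1)])
    then have "c = d" using sr_E[OF cE] by simp
    then have "s \<cdot> (x \<cdot> sr s) = t \<cdot> (x \<cdot> sr t)" using cd dc by simp
    then show ?thesis using ph by simp
  qed
qed

lemma phig_comp:
  assumes s: "s \<in> carrier G" and t: "t \<in> carrier G"
    and x1: "x \<in> Eg' (inv\<^bsub>G\<^esub> t)" and x2: "x \<in> Eg' (inv\<^bsub>G\<^esub> (s \<otimes>\<^bsub>G\<^esub> t))"
  shows "ph t x \<in> Eg' (inv\<^bsub>G\<^esub> s) \<and> ph s (ph t x) = ph (s \<otimes>\<^bsub>G\<^esub> t) x"
proof (cases "x = z")
  case True then show ?thesis using Eg_z phig_z by simp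
next
  case False
  have st: "s \<otimes>\<^bsub>G\<^esub> t \<in> carrier G" using s t by simp
  obtain a where a: "a \<noteq> z" "\<phi> a = t" "x \<cdot> (sr a \<cdot> a) = x" using Eg_inv_elim[OF t x1 False] by blast
  obtain b where b: "b \<noteq> z" "\<phi> b = s \<otimes>\<^bsub>G\<^esub> t" "x \<cdot> (sr b \<cdot> b) = x" using Eg_inv_elim[OF st x2 False] by blast
  have xE: "x \<in> E" using x1 Eg_E by blast
  have xx: "x \<cdot> x = x" using xE E_iff by blast
  have xxw: "x \<cdot> (x \<cdot> w) = x \<cdot> w" for w using xx by (metis sassoc)
  have xa: "x \<cdot> (sr a \<cdot> (a \<cdot> w)) = x \<cdot> w" for w using a(3) by (metis sassoc)
  have xb: "x \<cdot> (sr b \<cdot> (b \<cdot> w)) = x \<cdot> w" for w using b(3) by (metis sassoc)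
  have aax: "sr a \<cdot> (a \<cdot> x) = x"
  proof -
    have "(sr a \<cdot> a) \<cdot> x = x \<cdot> (sr a \<cdot> a)" by (rule ide_comm) (simp_all add: xx)
    then show ?thesis using a(3) by simp
  qed
  define y where "y = a \<cdot> (x \<cdot> sr a)"
  define c where "c = b \<cdot> (x \<cdot> sr a)"
  have phy: "ph t x = y" unfolding y_def by (rule phig_eq[OF a(1,2) xE a(3)])
  have src: "sr c = a \<cdot> (x \<cdot> sr b)" unfolding c_def by (simp add: sr_mult sr_E[OF xE])
  have srcc: "sr c \<cdot> c = y" unfolding src unfolding c_def y_def by (simp add: xb xxw)
  have yy: "y \<cdot> y = y" unfolding y_def by (simp add: xa xxw)
  then have yE: "y \<in> E" using E_iff by blast
  have yz: "y \<noteq> z"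
  proof
    assume "y = z"
    then have "sr a \<cdot> y \<cdot> a = z" by simp
    moreover have "sr a \<cdot> y \<cdot> a = x" unfolding y_def using aax a(3) by simp
    ultimately show False using False by simp
  qed
  have cz: "c \<noteq> z" using yz srcc by auto
  have bxz: "b \<cdot> x \<noteq> z" using cz unfolding c_def by (metis sassoc zl)
  have "\<phi> (b \<cdot> x) = s \<otimes>\<^bsub>G\<^esub> t" using phi_mult[OF b(1) False bxz] phi_E[OF False xE] b(2) st by simp
  moreover have "\<phi> (b \<cdot> x \<cdot> sr a) = \<phi> (b \<cdot> x) \<otimes>\<^bsub>G\<^esub> \<phi> (sr a)"
    using phi_mult[OF bxz sr_nz[OF a(1)]] cz unfolding c_def by simp
  ultimately have phc: "\<phi> c = s" using phi_sr[OF a(1)] a(2) s t unfolding c_def by (simp add: G.m_assoc)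
  have yc: "y \<cdot> (sr c \<cdot> c) = y" using srcc yy by simp
  have y_in: "y \<in> Eg' (inv\<^bsub>G\<^esub> s)" using Eg_inv_intro[OF cz phc yE yc] .
  have "ph s y = c \<cdot> (y \<cdot> sr c)" using phig_eq[OF cz phc yE yc] .
  also have "\<dots> = b \<cdot> (x \<cdot> sr b)" unfolding src unfolding c_def y_def by (simp add: xa xxw)
  also have "\<dots> = ph (s \<otimes>\<^bsub>G\<^esub> t) x" using phig_eq[OF b(1,2) xE b(3)] by simp
  finally show ?thesis using y_in phy by simp
qed

lemma phig_one: "x \<in> E \<Longrightarrow> ph \<one>\<^bsub>G\<^esub> x = x"
proof (cases "x = z")
  case True then show ?thesis using phig_z by simp
next
  case False
  assume x: "x \<in> E"
  have xx: "x \<cdot> x = x" using x E_iff by blast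
  have "ph \<one>\<^bsub>G\<^esub> x = x \<cdot> (x \<cdot> sr x)"
    by (rule phig_eq) (use False x phi_E sr_E[OF x] xx in \<open>simp_all add: idem_l\<close>)
  then show ?thesis using sr_E[OF x] xx by (simp add: idem_l)
qed

lemma phig_in: assumes g: "g \<in> carrier G" and x: "x \<in> Eg' (inv\<^bsub>G\<^esub> g)" shows "ph g x \<in> Eg' g"
proof -
  have "x \<in> Eg' (inv\<^bsub>G\<^esub> (inv\<^bsub>G\<^esub> g \<otimes>\<^bsub>G\<^esub> g))" using g x Eg_E Eg_one by auto
  then show ?thesis using phig_comp[of "inv\<^bsub>G\<^esub> g" g x] g x by simp
qed

lemma phig_inv: assumes g: "g \<in> carrier G" and x: "x \<in> Eg' (inv\<^bsub>G\<^esub> g)" shows "ph (inv\<^bsub>G\<^esub> g) (ph g x) = x"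
proof -
  have "x \<in> Eg' (inv\<^bsub>G\<^esub> (inv\<^bsub>G\<^esub> g \<otimes>\<^bsub>G\<^esub> g))" using g x Eg_E Eg_one by auto
  then have "ph (inv\<^bsub>G\<^esub> g) (ph g x) = ph \<one>\<^bsub>G\<^esub> x" using phig_comp[of "inv\<^bsub>G\<^esub> g" g x] g x by simp
  then show ?thesis using phig_one x Eg_E by auto
qed

lemma phig_cross: assumes s: "s \<in> carrier G" and t: "t \<in> carrier G"
  and x1: "x \<in> Eg' (inv\<^bsub>G\<^esub> s)" and x2: "x \<in> Eg' t"
  shows "ph s x \<in> Eg' (s \<otimes>\<^bsub>G\<^esub> t)"
proof -
  let ?s' = "inv\<^bsub>G\<^esub> t \<otimes>\<^bsub>G\<^esub> inv\<^bsub>G\<^esub> s"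
  have s': "?s' \<in> carrier G" using s t by simp
  have e1: "?s' \<otimes>\<^bsub>G\<^esub> s = inv\<^bsub>G\<^esub> t" using s t by (simp add: G.m_assoc)
  have e2: "inv\<^bsub>G\<^esub> ?s' = s \<otimes>\<^bsub>G\<^esub> t" using s t by (simp add: G.inv_mult_group)
  have "x \<in> Eg' (inv\<^bsub>G\<^esub> (?s' \<otimes>\<^bsub>G\<^esub> s))" using e1 x2 t by simp
  then have "ph s x \<in> Eg' (inv\<^bsub>G\<^esub> ?s')" using phig_comp[OF s' s x1] by blast
  then show ?thesis using e2 by simp
qed

lemma phig_mono:
  assumes g: "g \<in> carrier G" and x: "x \<in> Eg' (inv\<^bsub>G\<^esub> g)" and y: "y \<in> Eg' (inv\<^bsub>G\<^esub> g)" and xy: "sleq sm x y"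
  shows "sleq sm (ph g x) (ph g y)"
proof (cases "x = z")
  case True then show ?thesis unfolding sleq_def using phig_z by simp
next
  case False
  have xy': "x \<cdot> y = x" using xy unfolding sleq_def by simp
  have yz: "y \<noteq> z" using False xy' by auto
  obtain s where s: "s \<noteq> z" "\<phi> s = g" "y \<cdot> (sr s \<cdot> s) = y" using Eg_inv_elim[OF g y yz] by blast
  have xE: "x \<in> E" and yE: "y \<in> E" using x y Eg_E by auto
  have xs: "x \<cdot> (sr s \<cdot> s) = x" using xy' s(3) by (metis sassoc)
  have xyw: "x \<cdot> (y \<cdot> w) = x \<cdot> w" for w using xy' by (metis sassoc)
  have xsw: "x \<cdot> (sr s \<cdot> (s \<cdot> w)) = x \<cdot> w" for w using xs by (metis sassoc)
  have "ph g x = s \<cdot> (x \<cdot> sr s)" by (rule phig_eq[OF s(1,2) xE xs])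
  moreover have "ph g y = s \<cdot> (y \<cdot> sr s)" by (rule phig_eq[OF s(1,2) yE s(3)])
  ultimately show ?thesis unfolding sleq_def by (simp add: xsw xyw)
qed

end

lemma co_transfer:
  assumes h: "homeomorphic_map (subtopology X A) (subtopology X B) f"
    and A: "openin X A" and B: "openin X B" and V: "V \<subseteq> A"
  shows "(openin X (f ` V) \<and> compactin X (f ` V)) \<longleftrightarrow> (openin X V \<and> compactin X V)"
    and "f ` V \<subseteq> B"
proof -
  have tA: "topspace (subtopology X A) = A" using openin_subset[OF A] by auto
  have tB: "topspace (subtopology X B) = B" using openin_subset[OF B] by auto
  have VA: "V \<subseteq> topspace (subtopology X A)" using V tA by simp
  have sur: "f ` A = B" using homeomorphic_imp_surjective_map[OF h] tA tB by simp
  then show fV: "f ` V \<subseteq> B" using V by blast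
  have "openin (subtopology X B) (f ` V) \<longleftrightarrow> openin (subtopology X A) V"
    by (rule homeomorphic_map_openness[OF h VA])
  then have o: "openin X (f ` V) \<longleftrightarrow> openin X V"
    using openin_open_subtopology[OF A] openin_open_subtopology[OF B] V fV by blast
  have "compactin (subtopology X B) (f ` V) \<longleftrightarrow> compactin (subtopology X A) V"
    by (rule homeomorphic_map_compactness[OF h VA])
  then have c: "compactin X (f ` V) \<longleftrightarrow> compactin X V"
    using compactin_subtopology V fV by blast
  show "(openin X (f ` V) \<and> compactin X (f ` V)) \<longleftrightarrow> (openin X V \<and> compactin X V)"
    using o c by blast
qed

lemma co_transfer2:
  assumes h: "homeomorphic_map Y (subtopology X B) f"
    and B: "openin X B" and V: "V \<subseteq> topspace Y"
  shows "(openin X (f ` V) \<and> compactin X (f ` V)) \<longleftrightarrow> (openin Y V \<and> compactin Y V)"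
    and "f ` V \<subseteq> B"
proof -
  have tB: "topspace (subtopology X B) = B" using openin_subset[OF B] by auto
  have sur: "f ` topspace Y = B" using homeomorphic_imp_surjective_map[OF h] tB by simp
  then show fV: "f ` V \<subseteq> B" using V by blast
  have "openin (subtopology X B) (f ` V) \<longleftrightarrow> openin Y V"
    by (rule homeomorphic_map_openness[OF h V])
  then have o: "openin X (f ` V) \<longleftrightarrow> openin Y V"
    using openin_open_subtopology[OF B] fV by blast
  have "compactin (subtopology X B) (f ` V) \<longleftrightarrow> compactin Y V"
    by (rule homeomorphic_map_compactness[OF h V])
  then have c: "compactin X (f ` V) \<longleftrightarrow> compactin Y V"
    using compactin_subtopology fV by blast
  show "(openin X (f ` V) \<and> compactin X (f ` V)) \<longleftrightarrow> (openin Y V \<and> compactin Y V)"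
    using o c by blast
qed

lemma Tc_iff: "V \<in> Tc P m \<longleftrightarrow> openin (tight_topology P m) V \<and> compactin (tight_topology P m) V"
  unfolding Tc_def by simp

lemma Tc_sub: "V \<in> Tc P m \<Longrightarrow> V \<subseteq> tight_filters P m"
  unfolding Tc_iff using openin_subset topspace_TT by metis

lemma Tc_Un: "a \<in> Tc P m \<Longrightarrow> b \<in> Tc P m \<Longrightarrow> a \<union> b \<in> Tc P m"
  unfolding Tc_iff by (simp add: openin_Un compactin_Un)

lemma Tc_Int: "a \<in> Tc P m \<Longrightarrow> b \<in> Tc P m \<Longrightarrow> a \<inter> b \<in> Tc P m"
proof -
  assume a: "a \<in> Tc P m" and b: "b \<in> Tc P m"
  have "closedin (tight_topology P m) b" using compactin_imp_closedin[OF Hausdorff_TT] b unfolding Tc_iff by blast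
  then have "compactin (tight_topology P m) (b \<inter> a)" using closed_Int_compactin a unfolding Tc_iff by blast
  moreover have "openin (tight_topology P m) (a \<inter> b)" using a b unfolding Tc_iff by (simp add: openin_Int)
  ultimately show ?thesis unfolding Tc_iff by (simp add: Int_commute)
qed

lemma Tc_Diff: "a \<in> Tc P m \<Longrightarrow> b \<in> Tc P m \<Longrightarrow> a - b \<in> Tc P m"
proof -
  assume a: "a \<in> Tc P m" and b: "b \<in> Tc P m"
  let ?X = "tight_topology P m"
  have cb: "closedin ?X b" using compactin_imp_closedin[OF Hausdorff_TT] b unfolding Tc_iff by blast
  have ob: "openin ?X b" using b unfolding Tc_iff by blast
  have ae: "a - b = (topspace ?X - b) \<inter> a" using a Tc_sub topspace_TT by blast
  have "closedin ?X (topspace ?X - b)" using ob by (simp add: closedin_diff)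
  then have "compactin ?X ((topspace ?X - b) \<inter> a)" using closed_Int_compactin a unfolding Tc_iff by blast
  moreover have "openin ?X ((topspace ?X - b) \<inter> a)" using a cb unfolding Tc_iff
    by (simp add: openin_Int openin_diff)
  ultimately show ?thesis unfolding Tc_iff ae by simp
qed

context graded begin

abbreviation TT where "TT \<equiv> tight_topology E sm"

definition Dg where "Dg g = {F \<in> tight_filters E sm. F \<inter> Eg' g \<noteq> {}}"

definition Phi where "Phi g \<xi> = up E sm (ph g ` (\<xi> \<inter> Eg' (inv\<^bsub>G\<^esub> g)))"

lemma sub_g: "msl_sub E sm z (Eg' g)"
proof (rule msl_sub.intro[OF E_msl])
  show "msl_sub_axioms E sm z (Eg' g)"
  proof
    show "Eg' g \<subseteq> E" by (rule Eg_E)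
    show "z \<in> Eg' g" by (rule Eg_z)
    fix x y assume "x \<in> Eg' g" "y \<in> E" "sleq sm y x"
    then show "y \<in> Eg' g" using Eg_down unfolding sleq_def by metis
  qed
qed

lemma Dg_DQ: "Dg g = msl_sub.DQ E sm (Eg' g)"
  unfolding Dg_def msl_sub.DQ_def[OF sub_g] by simp

lemma Dg_open: "openin TT (Dg g)"
  unfolding Dg_DQ by (rule msl_sub.DQ_open[OF sub_g])

lemma Dg_sub: "Dg g \<subseteq> tight_filters E sm" unfolding Dg_def by blast

lemma Dg_one: "Dg \<one>\<^bsub>G\<^esub> = tight_filters E sm"
proof -
  have "F \<inter> E \<noteq> {}" if "F \<in> tight_filters E sm" for F
  proof -
    have "F \<in> filters E sm" using that tight_filters_sub[of E sm] by blast
    then have "F \<noteq> {}" "F \<subseteq> E" using msl.filtersD(1,2)[OF E_msl] by blast+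
    then show ?thesis by blast
  qed
  then show ?thesis unfolding Dg_def Eg_one by blast
qed

lemma homeo_r: "homeomorphic_maps (subtopology TT (Dg g)) (tight_topology (Eg' g) sm) (\<lambda>F. F \<inter> Eg' g) (up E sm)"
  unfolding Dg_DQ by (rule msl_sub.homeo_DQ[OF sub_g])

lemma iso_g: assumes g: "g \<in> carrier G"
  shows "msl_iso (Eg' (inv\<^bsub>G\<^esub> g)) (Eg' g) sm z (ph g) (ph (inv\<^bsub>G\<^esub> g))"
proof (rule msl_iso.intro[OF msl_sub.Q_msl[OF sub_g] msl_sub.Q_msl[OF sub_g]])
  have ig: "inv\<^bsub>G\<^esub> g \<in> carrier G" using g by simp
  have iig: "inv\<^bsub>G\<^esub> (inv\<^bsub>G\<^esub> g) = g" using g by simp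
  show "msl_iso_axioms (Eg' (inv\<^bsub>G\<^esub> g)) (Eg' g) sm (ph g) (ph (inv\<^bsub>G\<^esub> g))"
  proof
    fix x assume x: "x \<in> Eg' (inv\<^bsub>G\<^esub> g)"
    show "ph g x \<in> Eg' g" by (rule phig_in[OF g x])
    show "ph (inv\<^bsub>G\<^esub> g) (ph g x) = x" by (rule phig_inv[OF g x])
  next
    fix y assume y: "y \<in> Eg' g"
    then have y': "y \<in> Eg' (inv\<^bsub>G\<^esub> (inv\<^bsub>G\<^esub> g))" using iig by simp
    show "ph (inv\<^bsub>G\<^esub> g) y \<in> Eg' (inv\<^bsub>G\<^esub> g)" using phig_in[OF ig y'] .
    show "ph g (ph (inv\<^bsub>G\<^esub> g) y) = y" using phig_inv[OF ig y'] iig by simp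
  next
    fix x y assume "x \<in> Eg' (inv\<^bsub>G\<^esub> g)" "y \<in> Eg' (inv\<^bsub>G\<^esub> g)" "sleq sm x y"
    then show "sleq sm (ph g x) (ph g y)" by (rule phig_mono[OF g])
  next
    fix x y assume "x \<in> Eg' g" "y \<in> Eg' g" "sleq sm x y"
    then have "x \<in> Eg' (inv\<^bsub>G\<^esub> (inv\<^bsub>G\<^esub> g))" "y \<in> Eg' (inv\<^bsub>G\<^esub> (inv\<^bsub>G\<^esub> g))" "sleq sm x y"
      using iig by simp_all
    then show "sleq sm (ph (inv\<^bsub>G\<^esub> g) x) (ph (inv\<^bsub>G\<^esub> g) y)" by (rule phig_mono[OF ig])
  qed
qed

lemma Phi_homeo: assumes g: "g \<in> carrier G"
  shows "homeomorphic_map (subtopology TT (Dg (inv\<^bsub>G\<^esub> g))) (subtopology TT (Dg g)) (Phi g)"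
proof -
  have h1: "homeomorphic_map (subtopology TT (Dg (inv\<^bsub>G\<^esub> g))) (tight_topology (Eg' (inv\<^bsub>G\<^esub> g)) sm) (\<lambda>F. F \<inter> Eg' (inv\<^bsub>G\<^esub> g))"
    using homeomorphic_maps_imp_map[OF homeo_r] .
  have h2: "homeomorphic_map (tight_topology (Eg' (inv\<^bsub>G\<^esub> g)) sm) (tight_topology (Eg' g) sm) (\<lambda>F. ph g ` F)"
    using homeomorphic_maps_imp_map[OF img_homeo[OF iso_g[OF g]]] .
  have h3: "homeomorphic_map (tight_topology (Eg' g) sm) (subtopology TT (Dg g)) (up E sm)"
    using homeomorphic_maps_imp_map[OF homeomorphic_maps_sym[THEN iffD1, OF homeo_r]] .
  have "homeomorphic_map (subtopology TT (Dg (inv\<^bsub>G\<^esub> g))) (subtopology TT (Dg g))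
      (up E sm \<circ> ((\<lambda>F. ph g ` F) \<circ> (\<lambda>F. F \<inter> Eg' (inv\<^bsub>G\<^esub> g))))"
    by (rule homeomorphic_map_compose[OF homeomorphic_map_compose[OF h1 h2] h3])
  moreover have "up E sm \<circ> ((\<lambda>F. ph g ` F) \<circ> (\<lambda>F. F \<inter> Eg' (inv\<^bsub>G\<^esub> g))) = Phi g"
    by (rule ext) (simp add: Phi_def)
  ultimately show ?thesis by simp
qed

lemma Phi_in: assumes g: "g \<in> carrier G" and xi: "\<xi> \<in> Dg (inv\<^bsub>G\<^esub> g)" shows "Phi g \<xi> \<in> Dg g"
proof -
  have "Phi g ` topspace (subtopology TT (Dg (inv\<^bsub>G\<^esub> g))) = topspace (subtopology TT (Dg g))"
    by (rule homeomorphic_imp_surjective_map[OF Phi_homeo[OF g]])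
  then show ?thesis using xi Dg_sub topspace_TT[of E sm] by auto
qed

lemma up_E: "F \<in> filters E sm \<Longrightarrow> up E sm F = F"
proof -
  assume F: "F \<in> filters E sm"
  interpret S: msl_sub E sm z "Eg' \<one>\<^bsub>G\<^esub>" by (rule sub_g)
  have "F \<inter> Eg' \<one>\<^bsub>G\<^esub> = F" using msl.filtersD(2)[OF E_msl F] Eg_one by blast
  moreover have "F \<inter> Eg' \<one>\<^bsub>G\<^esub> \<noteq> {}" using calculation msl.filtersD(1)[OF E_msl F] by simp
  ultimately show ?thesis using S.restr_filter(2)[OF F] by simp
qed

lemma Phi_one: assumes xi: "\<xi> \<in> tight_filters E sm" shows "Phi \<one>\<^bsub>G\<^esub> \<xi> = \<xi>"
proof -
  have F: "\<xi> \<in> filters E sm" using xi tight_filters_sub[of E sm] by blast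
  have xE: "\<xi> \<subseteq> E" using msl.filtersD(2)[OF E_msl F] .
  have "ph \<one>\<^bsub>G\<^esub> ` (\<xi> \<inter> Eg' (inv\<^bsub>G\<^esub> \<one>\<^bsub>G\<^esub>)) = \<xi>"
  proof -
    have "\<xi> \<inter> Eg' (inv\<^bsub>G\<^esub> \<one>\<^bsub>G\<^esub>) = \<xi>" using xE Eg_one by (simp add: Int_absorb2)
    moreover have "ph \<one>\<^bsub>G\<^esub> ` \<xi> = \<xi>" using phig_one xE by (force simp: image_iff)
    ultimately show ?thesis by simp
  qed
  then show ?thesis unfolding Phi_def using up_E[OF F] by simp
qed

lemma Phi_comp:
  assumes s: "s \<in> carrier G" and t: "t \<in> carrier G"
    and x1: "\<xi> \<in> Dg (inv\<^bsub>G\<^esub> t)" and x2: "\<xi> \<in> Dg (inv\<^bsub>G\<^esub> (s \<otimes>\<^bsub>G\<^esub> t))"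
  shows "Phi s (Phi t \<xi>) = Phi (s \<otimes>\<^bsub>G\<^esub> t) \<xi>"
proof -
  interpret M: msl E sm z by (rule E_msl)
  let ?Q1 = "Eg' (inv\<^bsub>G\<^esub> t)" and ?Q2 = "Eg' (inv\<^bsub>G\<^esub> (s \<otimes>\<^bsub>G\<^esub> t))" and ?Q3 = "Eg' (inv\<^bsub>G\<^esub> s)"
  have st: "s \<otimes>\<^bsub>G\<^esub> t \<in> carrier G" using s t by simp
  have F: "\<xi> \<in> filters E sm" using x1 Dg_sub tight_filters_sub[of E sm] by blast
  have FE: "\<xi> \<subseteq> E" using M.filtersD(2)[OF F] .
  obtain e1 where e1: "e1 \<in> \<xi>" "e1 \<in> ?Q1" using x1 unfolding Dg_def by blast
  obtain e2 where e2: "e2 \<in> \<xi>" "e2 \<in> ?Q2" using x2 unfolding Dg_def by blast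
  define e0 where "e0 = e1 \<cdot> e2"
  have e0F: "e0 \<in> \<xi>" unfolding e0_def using M.filtersD(5)[OF F e1(1) e2(1)] .
  have e0E: "e0 \<in> E" using e0F FE by blast
  have e1E: "e1 \<in> E" and e2E: "e2 \<in> E" using e1 e2 FE by auto
  have e0Q1: "e0 \<in> ?Q1" using Eg_down[OF e1(2) e0E] M.meet_le1[OF e1E e2E] unfolding e0_def sleq_def by metis
  have e0Q2: "e0 \<in> ?Q2" using Eg_down[OF e2(2) e0E] M.meet_le2[OF e1E e2E] unfolding e0_def sleq_def by metis
  have low: "v \<cdot> e0 \<in> \<xi> \<and> v \<cdot> e0 \<in> ?Q1 \<and> v \<cdot> e0 \<in> ?Q2 \<and> sleq sm (v \<cdot> e0) v \<and> v \<cdot> e0 \<in> E" if v: "v \<in> \<xi>" for v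
  proof -
    have vE: "v \<in> E" using v FE by blast
    have xE: "v \<cdot> e0 \<in> E" using M.closed[OF vE e0E] .
    have l1: "sleq sm (v \<cdot> e0) v" using M.meet_le1[OF vE e0E] .
    have l2: "sleq sm (v \<cdot> e0) e0" using M.meet_le2[OF vE e0E] .
    have "v \<cdot> e0 \<in> ?Q1" using Eg_down[OF e0Q1 xE] l2 unfolding sleq_def by metis
    moreover have "v \<cdot> e0 \<in> ?Q2" using Eg_down[OF e0Q2 xE] l2 unfolding sleq_def by metis
    moreover have "v \<cdot> e0 \<in> \<xi>" using M.filtersD(5)[OF F v e0F] .
    ultimately show ?thesis using l1 xE by blast
  qed
  have phE: "ph g x \<in> E" if "g \<in> carrier G" "x \<in> Eg' (inv\<^bsub>G\<^esub> g)" for g x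
    using phig_in[OF that] Eg_E by blast
  show ?thesis
  proof (intro equalityI subsetI)
    fix y assume "y \<in> Phi s (Phi t \<xi>)"
    then obtain w where y: "y \<in> E" and w: "w \<in> Phi t \<xi>" "w \<in> ?Q3" and wy: "sleq sm (ph s w) y"
      unfolding Phi_def up_def by blast
    obtain v where wE: "w \<in> E" and v: "v \<in> \<xi>" "v \<in> ?Q1" and vw: "sleq sm (ph t v) w"
      using w(1) unfolding Phi_def up_def by blast
    define x where "x = v \<cdot> e0"
    have x: "x \<in> \<xi>" "x \<in> ?Q1" "x \<in> ?Q2" "sleq sm x v" "x \<in> E" using low[OF v(1)] unfolding x_def by blast+
    have c: "ph t x \<in> ?Q3" "ph s (ph t x) = ph (s \<otimes>\<^bsub>G\<^esub> t) x" using phig_comp[OF s t x(2) x(3)] by blast+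
    have "sleq sm (ph t x) (ph t v)" by (rule phig_mono[OF t x(2) v(2) x(4)])
    then have "sleq sm (ph t x) w" using M.le_trans phE[OF t x(2)] phE[OF t v(2)] wE vw by blast
    then have "sleq sm (ph s (ph t x)) (ph s w)" by (rule phig_mono[OF s c(1) w(2)])
    then have "sleq sm (ph (s \<otimes>\<^bsub>G\<^esub> t) x) y"
      using M.le_trans c phE[OF s c(1)] phE[OF s w(2)] y wy by metis
    then show "y \<in> Phi (s \<otimes>\<^bsub>G\<^esub> t) \<xi>" unfolding Phi_def up_def using y x by blast
  next
    fix y assume "y \<in> Phi (s \<otimes>\<^bsub>G\<^esub> t) \<xi>"
    then obtain v where y: "y \<in> E" and v: "v \<in> \<xi>" "v \<in> ?Q2" and vy: "sleq sm (ph (s \<otimes>\<^bsub>G\<^esub> t) v) y"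
      unfolding Phi_def up_def by blast
    define x where "x = v \<cdot> e0"
    have x: "x \<in> \<xi>" "x \<in> ?Q1" "x \<in> ?Q2" "sleq sm x v" "x \<in> E" using low[OF v(1)] unfolding x_def by blast+
    have c: "ph t x \<in> ?Q3" "ph s (ph t x) = ph (s \<otimes>\<^bsub>G\<^esub> t) x" using phig_comp[OF s t x(2) x(3)] by blast+
    have "sleq sm (ph (s \<otimes>\<^bsub>G\<^esub> t) x) (ph (s \<otimes>\<^bsub>G\<^esub> t) v)" by (rule phig_mono[OF st x(3) v(2) x(4)])
    then have "sleq sm (ph s (ph t x)) y" using M.le_trans c phE[OF st x(3)] phE[OF st v(2)] y vy by metis
    moreover have txE: "ph t x \<in> E" using phE[OF t x(2)] .
    moreover have "ph t x \<in> Phi t \<xi>" unfolding Phi_def up_def using txE M.le_refl[OF txE] x by blast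
    ultimately show "y \<in> Phi s (Phi t \<xi>)" unfolding Phi_def up_def using y c(1) by blast
  qed
qed

lemma Phi_cross:
  assumes s: "s \<in> carrier G" and t: "t \<in> carrier G"
    and x1: "\<xi> \<in> Dg (inv\<^bsub>G\<^esub> s)" and x2: "\<xi> \<in> Dg t"
  shows "Phi s \<xi> \<in> Dg (s \<otimes>\<^bsub>G\<^esub> t)"
proof -
  interpret M: msl E sm z by (rule E_msl)
  have F: "\<xi> \<in> filters E sm" using x1 Dg_sub tight_filters_sub[of E sm] by blast
  have FE: "\<xi> \<subseteq> E" using M.filtersD(2)[OF F] .
  obtain e1 where e1: "e1 \<in> \<xi>" "e1 \<in> Eg' (inv\<^bsub>G\<^esub> s)" using x1 unfolding Dg_def by blast
  obtain e2 where e2: "e2 \<in> \<xi>" "e2 \<in> Eg' t" using x2 unfolding Dg_def by blast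
  have e1E: "e1 \<in> E" and e2E: "e2 \<in> E" using e1 e2 FE by auto
  have xE: "e1 \<cdot> e2 \<in> E" using M.closed[OF e1E e2E] .
  have xQ1: "e1 \<cdot> e2 \<in> Eg' (inv\<^bsub>G\<^esub> s)" using Eg_down[OF e1(2) xE] M.meet_le1[OF e1E e2E] unfolding sleq_def by metis
  have xQ2: "e1 \<cdot> e2 \<in> Eg' t" using Eg_down[OF e2(2) xE] M.meet_le2[OF e1E e2E] unfolding sleq_def by metis
  have xF: "e1 \<cdot> e2 \<in> \<xi>" using M.filtersD(5)[OF F e1(1) e2(1)] .
  have p: "ph s (e1 \<cdot> e2) \<in> Eg' (s \<otimes>\<^bsub>G\<^esub> t)" by (rule phig_cross[OF s t xQ1 xQ2])
  have pE: "ph s (e1 \<cdot> e2) \<in> E" using phig_in[OF s xQ1] Eg_E by blast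
  have "ph s (e1 \<cdot> e2) \<in> Phi s \<xi>" unfolding Phi_def up_def using pE M.le_refl[OF pE] xF xQ1 by blast
  moreover have "Phi s \<xi> \<in> tight_filters E sm" using Phi_in[OF s x1] Dg_sub by blast
  ultimately show ?thesis unfolding Dg_def using p by blast
qed

end

context graded begin

lemma iota_eq: assumes U: "U \<subseteq> tight_filters (Eg' g) sm"
  shows "iota sm z \<phi> g U = up E sm ` U"
proof -
  interpret S: msl_sub E sm z "Eg' g" by (rule sub_g)
  show ?thesis
  proof (intro equalityI subsetI)
    fix \<xi> assume "\<xi> \<in> iota sm z \<phi> g U"
    then have xi: "\<xi> \<in> tight_filters E sm" and ne: "\<xi> \<inter> Eg' g \<noteq> {}" and inU: "\<xi> \<inter> Eg' g \<in> U"
      unfolding iota_def by blast+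
    have F: "\<xi> \<in> filters E sm" using xi tight_filters_sub[of E sm] by blast
    have "up E sm (\<xi> \<inter> Eg' g) = \<xi>" by (rule S.restr_filter(2)[OF F ne])
    then show "\<xi> \<in> up E sm ` U" using inU by (metis image_eqI)
  next
    fix \<xi> assume "\<xi> \<in> up E sm ` U"
    then obtain \<eta> where eta: "\<eta> \<in> U" and xe: "\<xi> = up E sm \<eta>" by blast
    have et: "\<eta> \<in> tight_filters (Eg' g) sm" using eta U by blast
    have ef: "\<eta> \<in> filters (Eg' g) sm" using et tight_filters_sub[of "Eg' g" sm] by blast
    have 1: "up E sm \<eta> \<in> tight_filters E sm" by (rule S.up_tight[OF et])
    have 2: "up E sm \<eta> \<inter> Eg' g = \<eta>" by (rule S.up_filter(2)[OF ef])
    have 3: "\<eta> \<noteq> {}" by (rule S.Qs.filtersD(1)[OF ef])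
    show "\<xi> \<in> iota sm z \<phi> g U" unfolding iota_def xe using 1 2 3 eta by simp
  qed
qed

lemma h3: "homeomorphic_map (tight_topology (Eg' g) sm) (subtopology TT (Dg g)) (up E sm)"
  using homeomorphic_maps_imp_map[OF homeomorphic_maps_sym[THEN iffD1, OF homeo_r]] .

lemma Ig_char: "Ig sm z \<phi> g = {V \<in> Tc E sm. V \<subseteq> Dg g}"
proof -
  interpret S: msl_sub E sm z "Eg' g" by (rule sub_g)
  show ?thesis
  proof (intro equalityI subsetI)
    fix V assume "V \<in> Ig sm z \<phi> g"
    then obtain U where U: "U \<in> Tc (Eg' g) sm" and V: "V = iota sm z \<phi> g U" unfolding Ig_def by blast
    have Us: "U \<subseteq> tight_filters (Eg' g) sm" using Tc_sub[OF U] .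
    have Vu: "V = up E sm ` U" using V iota_eq[OF Us] by simp
    have Ut: "U \<subseteq> topspace (tight_topology (Eg' g) sm)" using Us topspace_TT[of "Eg' g" sm] by simp
    have "(openin TT (up E sm ` U) \<and> compactin TT (up E sm ` U))"
      using co_transfer2(1)[OF h3 Dg_open Ut] U unfolding Tc_iff by blast
    moreover have "up E sm ` U \<subseteq> Dg g" by (rule co_transfer2(2)[OF h3 Dg_open Ut])
    ultimately show "V \<in> {V \<in> Tc E sm. V \<subseteq> Dg g}" unfolding Vu Tc_iff by blast
  next
    fix V assume "V \<in> {V \<in> Tc E sm. V \<subseteq> Dg g}"
    then have V: "V \<in> Tc E sm" and VD: "V \<subseteq> Dg g" by blast+
    let ?U = "(\<lambda>F. F \<inter> Eg' g) ` V"
    have Us: "?U \<subseteq> tight_filters (Eg' g) sm"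
      using VD S.restr_tight unfolding Dg_def by blast
    have Ut: "?U \<subseteq> topspace (tight_topology (Eg' g) sm)" using Us topspace_TT[of "Eg' g" sm] by simp
    have upU: "up E sm ` ?U = V"
    proof -
      have "up E sm (F \<inter> Eg' g) = F" if "F \<in> V" for F
      proof -
        have "F \<in> tight_filters E sm" "F \<inter> Eg' g \<noteq> {}" using that VD unfolding Dg_def by blast+
        then show ?thesis using S.restr_filter(2) tight_filters_sub[of E sm] by blast
      qed
      then show ?thesis by (force simp: image_image)
    qed
    have "openin (tight_topology (Eg' g) sm) ?U \<and> compactin (tight_topology (Eg' g) sm) ?U"
      using co_transfer2(1)[OF h3 Dg_open Ut] V unfolding upU Tc_iff by blast
    then have UT: "?U \<in> Tc (Eg' g) sm" unfolding Tc_iff by blast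
    have "iota sm z \<phi> g ?U = V" using iota_eq[OF Us] upU by simp
    then show "V \<in> Ig sm z \<phi> g" unfolding Ig_def using UT by (metis image_eqI)
  qed
qed

lemma theta_eq: assumes g: "g \<in> carrier G" and V: "V \<in> Ig sm z \<phi> (inv\<^bsub>G\<^esub> g)"
  shows "theta sm z G \<phi> g V = Phi g ` V"
proof -
  let ?Q' = "Eg' (inv\<^bsub>G\<^esub> g)"
  interpret S: msl_sub E sm z ?Q' by (rule sub_g)
  obtain U0 where U0: "U0 \<in> Tc ?Q' sm" and V0: "V = iota sm z \<phi> (inv\<^bsub>G\<^esub> g) U0"
    using V unfolding Ig_def by blast
  have U0s: "U0 \<subseteq> tight_filters ?Q' sm" using Tc_sub[OF U0] .
  have VU0: "V = up E sm ` U0" using V0 iota_eq[OF U0s] by simp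
  have inj: "(\<lambda>F. F \<inter> ?Q') ` up E sm ` U = U" if "U \<subseteq> tight_filters ?Q' sm" for U
  proof -
    have "up E sm \<eta> \<inter> ?Q' = \<eta>" if "\<eta> \<in> U" for \<eta>
      using S.up_filter(2) \<open>U \<subseteq> tight_filters ?Q' sm\<close> that tight_filters_sub[of ?Q' sm] by blast
    then show ?thesis by (force simp: image_image)
  qed
  have the: "(THE U. U \<in> Tc ?Q' sm \<and> iota sm z \<phi> (inv\<^bsub>G\<^esub> g) U = V) = U0"
  proof (rule the_equality)
    show "U0 \<in> Tc ?Q' sm \<and> iota sm z \<phi> (inv\<^bsub>G\<^esub> g) U0 = V" using U0 V0 by simp
    fix U assume "U \<in> Tc ?Q' sm \<and> iota sm z \<phi> (inv\<^bsub>G\<^esub> g) U = V"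
    then have U1: "U \<subseteq> tight_filters ?Q' sm" and U2: "iota sm z \<phi> (inv\<^bsub>G\<^esub> g) U = V"
      using Tc_sub by blast+
    have U: "U \<subseteq> tight_filters ?Q' sm" "up E sm ` U = V" using U1 U2 iota_eq[OF U1] by simp_all
    have a: "(\<lambda>F. F \<inter> ?Q') ` V = U" unfolding U(2)[symmetric] by (rule inj[OF U(1)])
    have b: "(\<lambda>F. F \<inter> ?Q') ` V = U0" unfolding VU0 by (rule inj[OF U0s])
    show "U = U0" using a b by simp
  qed
  have hp: "hat_phig sm z \<phi> g U0 \<subseteq> tight_filters (Eg' g) sm"
    unfolding hat_phig_def using msl_iso.img_tight[OF iso_g[OF g]] U0s by blast
  have "theta sm z G \<phi> g V = up E sm ` hat_phig sm z \<phi> g U0"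
    unfolding theta_def the using iota_eq[OF hp] by simp
  also have "\<dots> = Phi g ` V"
  proof -
    have "Phi g (up E sm \<eta>) = up E sm (ph g ` \<eta>)" if "\<eta> \<in> U0" for \<eta>
    proof -
      have "up E sm \<eta> \<inter> ?Q' = \<eta>"
        using S.up_filter(2) U0s that tight_filters_sub[of ?Q' sm] by blast
      then show ?thesis unfolding Phi_def by simp
    qed
    then show ?thesis unfolding VU0 hat_phig_def by (force simp: image_image)
  qed
  finally show ?thesis .
qed

lemma Phi_Tc: assumes g: "g \<in> carrier G" and V: "V \<in> Tc E sm" and VD: "V \<subseteq> Dg (inv\<^bsub>G\<^esub> g)"
  shows "Phi g ` V \<in> Tc E sm" "Phi g ` V \<subseteq> Dg g"
  using co_transfer[OF Phi_homeo[OF g] Dg_open Dg_open VD] V unfolding Tc_iff by blast+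

lemma Phi_inv: assumes g: "g \<in> carrier G" and xi: "\<xi> \<in> Dg (inv\<^bsub>G\<^esub> g)"
  shows "Phi (inv\<^bsub>G\<^esub> g) (Phi g \<xi>) = \<xi>"
proof -
  have ig: "inv\<^bsub>G\<^esub> g \<in> carrier G" using g by simp
  have e: "inv\<^bsub>G\<^esub> g \<otimes>\<^bsub>G\<^esub> g = \<one>\<^bsub>G\<^esub>" using g by simp
  have x2: "\<xi> \<in> Dg (inv\<^bsub>G\<^esub> (inv\<^bsub>G\<^esub> g \<otimes>\<^bsub>G\<^esub> g))" using xi Dg_sub Dg_one e by auto
  have "Phi (inv\<^bsub>G\<^esub> g) (Phi g \<xi>) = Phi (inv\<^bsub>G\<^esub> g \<otimes>\<^bsub>G\<^esub> g) \<xi>" by (rule Phi_comp[OF ig g xi x2])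
  also have "\<dots> = \<xi>" using e Phi_one xi Dg_sub by auto
  finally show ?thesis .
qed

lemma Ig_ideal_ops:
  assumes a: "a \<in> Ig sm z \<phi> g" and b: "b \<in> Ig sm z \<phi> g"
  shows "a \<union> b \<in> Ig sm z \<phi> g" "a \<inter> b \<in> Ig sm z \<phi> g" "a - b \<in> Ig sm z \<phi> g"
  using a b Tc_Un Tc_Int Tc_Diff unfolding Ig_char by blast+

lemma PA: "partial_action G (Tc E sm) (Ig sm z \<phi>) (theta sm z G \<phi>)"
proof -
  let ?B = "Tc E sm" and ?I = "Ig sm z \<phi>" and ?th = "theta sm z G \<phi>"
  have h1: "\<forall>t\<in>carrier G. gba_ideal ?B (?I t) \<and> gba_iso (?I (inv\<^bsub>G\<^esub> t)) (?I t) (?th t)"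
  proof
    fix t assume t: "t \<in> carrier G"
    have it: "inv\<^bsub>G\<^esub> t \<in> carrier G" using t by simp
    have iit: "inv\<^bsub>G\<^esub> (inv\<^bsub>G\<^esub> t) = t" using t by simp
    have ideal: "gba_ideal ?B (?I t)"
      unfolding gba_ideal_def
    proof (intro conjI ballI)
      show "?I t \<subseteq> ?B" unfolding Ig_char by blast
      fix a b assume a: "a \<in> ?I t"
      { assume b: "b \<in> ?I t" then show "a \<union> b \<in> ?I t" using Ig_ideal_ops(1)[OF a] by blast }
      { assume b: "b \<in> ?B"
        then show "a \<inter> b \<in> ?I t" using a Tc_Int unfolding Ig_char by blast }
    qed
    have thI: "?th t V = Phi t ` V" if "V \<in> ?I (inv\<^bsub>G\<^esub> t)" for V by (rule theta_eq[OF t that])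
    have thI': "?th (inv\<^bsub>G\<^esub> t) W = Phi (inv\<^bsub>G\<^esub> t) ` W" if "W \<in> ?I t" for W
      using theta_eq[OF it, of W] that iit by simp
    have mapI: "Phi t ` V \<in> ?I t" if "V \<in> ?I (inv\<^bsub>G\<^esub> t)" for V
      using Phi_Tc[OF t, of V] that unfolding Ig_char by blast
    have mapI': "Phi (inv\<^bsub>G\<^esub> t) ` W \<in> ?I (inv\<^bsub>G\<^esub> t)" if "W \<in> ?I t" for W
      using Phi_Tc[OF it, of W] that iit unfolding Ig_char by auto
    have lr: "Phi (inv\<^bsub>G\<^esub> t) ` Phi t ` V = V" if "V \<subseteq> Dg (inv\<^bsub>G\<^esub> t)" for V
      using Phi_inv[OF t] that by (force simp: image_image)
    have rl: "Phi t ` Phi (inv\<^bsub>G\<^esub> t) ` W = W" if "W \<subseteq> Dg t" for W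
      using Phi_inv[OF it] that iit by (force simp: image_image)
    have injP: "inj_on (Phi t) (Dg (inv\<^bsub>G\<^esub> t))" using inj_on_inverseI[of "Dg (inv\<^bsub>G\<^esub> t)" "Phi (inv\<^bsub>G\<^esub> t)" "Phi t"] Phi_inv[OF t] by blast
    have bij: "bij_betw (?th t) (?I (inv\<^bsub>G\<^esub> t)) (?I t)"
    proof (rule bij_betw_byWitness[where f' = "?th (inv\<^bsub>G\<^esub> t)"])
      show "\<forall>a\<in>?I (inv\<^bsub>G\<^esub> t). ?th (inv\<^bsub>G\<^esub> t) (?th t a) = a"
        using thI thI' mapI lr unfolding Ig_char by auto
      show "\<forall>a\<in>?I t. ?th t (?th (inv\<^bsub>G\<^esub> t) a) = a"
        using thI thI' mapI' rl unfolding Ig_char by auto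
      show "?th t ` ?I (inv\<^bsub>G\<^esub> t) \<subseteq> ?I t" using thI mapI by auto
      show "?th (inv\<^bsub>G\<^esub> t) ` ?I t \<subseteq> ?I (inv\<^bsub>G\<^esub> t)" using thI' mapI' by auto
    qed
    have ops: "\<forall>a\<in>?I (inv\<^bsub>G\<^esub> t). \<forall>b\<in>?I (inv\<^bsub>G\<^esub> t).
        ?th t (a \<union> b) = ?th t a \<union> ?th t b \<and> ?th t (a \<inter> b) = ?th t a \<inter> ?th t b \<and> ?th t (a - b) = ?th t a - ?th t b"
    proof (intro ballI conjI)
      fix a b assume a: "a \<in> ?I (inv\<^bsub>G\<^esub> t)" and b: "b \<in> ?I (inv\<^bsub>G\<^esub> t)"
      have aD: "a \<subseteq> Dg (inv\<^bsub>G\<^esub> t)" and bD: "b \<subseteq> Dg (inv\<^bsub>G\<^esub> t)" using a b unfolding Ig_char by blast+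
      show "?th t (a \<union> b) = ?th t a \<union> ?th t b"
        using thI[OF Ig_ideal_ops(1)[OF a b]] thI[OF a] thI[OF b] by (simp add: image_Un)
      show "?th t (a \<inter> b) = ?th t a \<inter> ?th t b"
        using thI[OF Ig_ideal_ops(2)[OF a b]] thI[OF a] thI[OF b] inj_on_image_Int[OF injP aD bD] by simp
      show "?th t (a - b) = ?th t a - ?th t b"
      proof -
        have "a - b \<subseteq> Dg (inv\<^bsub>G\<^esub> t)" using aD by blast
        then have "Phi t ` (a - b) = Phi t ` a - Phi t ` b" by (rule inj_on_image_set_diff[OF injP _ bD])
        then show ?thesis using thI[OF Ig_ideal_ops(3)[OF a b]] thI[OF a] thI[OF b] by simp
      qed
    qed
    show "gba_ideal ?B (?I t) \<and> gba_iso (?I (inv\<^bsub>G\<^esub> t)) (?I t) (?th t)"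
      unfolding gba_iso_def using ideal bij ops by blast
  qed
  have h2: "?I \<one>\<^bsub>G\<^esub> = ?B"
    unfolding Ig_char Dg_one using Tc_sub by blast
  have h3: "\<forall>x\<in>?B. ?th \<one>\<^bsub>G\<^esub> x = x"
  proof
    fix x assume x: "x \<in> ?B"
    have x': "x \<in> ?I (inv\<^bsub>G\<^esub> \<one>\<^bsub>G\<^esub>)" using x h2 by simp
    have "?th \<one>\<^bsub>G\<^esub> x = Phi \<one>\<^bsub>G\<^esub> ` x" by (rule theta_eq[OF G.one_closed x'])
    also have "\<dots> = x" using Phi_one Tc_sub[OF x] by (force simp: image_iff)
    finally show "?th \<one>\<^bsub>G\<^esub> x = x" .
  qed
  have h4: "\<forall>s\<in>carrier G. \<forall>t\<in>carrier G. ?th s ` (?I (inv\<^bsub>G\<^esub> s) \<inter> ?I t) = ?I s \<inter> ?I (s \<otimes>\<^bsub>G\<^esub> t)"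
  proof (intro ballI equalityI subsetI)
    fix s t assume s: "s \<in> carrier G" and t: "t \<in> carrier G"
    have is': "inv\<^bsub>G\<^esub> s \<in> carrier G" using s by simp
    have iis: "inv\<^bsub>G\<^esub> (inv\<^bsub>G\<^esub> s) = s" using s by simp
    have st: "s \<otimes>\<^bsub>G\<^esub> t \<in> carrier G" using s t by simp
    {
      fix W assume "W \<in> ?th s ` (?I (inv\<^bsub>G\<^esub> s) \<inter> ?I t)"
      then obtain V where V1: "V \<in> ?I (inv\<^bsub>G\<^esub> s)" and V2: "V \<in> ?I t" and W: "W = ?th s V" by blast
      have W': "W = Phi s ` V" using W theta_eq[OF s V1] by simp
      have VB: "V \<in> ?B" and VD1: "V \<subseteq> Dg (inv\<^bsub>G\<^esub> s)" and VD2: "V \<subseteq> Dg t"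
        using V1 V2 unfolding Ig_char by blast+
      have "Phi s ` V \<in> ?B" "Phi s ` V \<subseteq> Dg s" using Phi_Tc[OF s VB VD1] by blast+
      moreover have "Phi s ` V \<subseteq> Dg (s \<otimes>\<^bsub>G\<^esub> t)" using Phi_cross[OF s t] VD1 VD2 by blast
      ultimately show "W \<in> ?I s \<inter> ?I (s \<otimes>\<^bsub>G\<^esub> t)" unfolding W' Ig_char by blast
    }
    {
      fix W assume "W \<in> ?I s \<inter> ?I (s \<otimes>\<^bsub>G\<^esub> t)"
      then have WB: "W \<in> ?B" and WD1: "W \<subseteq> Dg s" and WD2: "W \<subseteq> Dg (s \<otimes>\<^bsub>G\<^esub> t)"
        unfolding Ig_char by blast+
      let ?V = "Phi (inv\<^bsub>G\<^esub> s) ` W"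
      have WD1': "W \<subseteq> Dg (inv\<^bsub>G\<^esub> (inv\<^bsub>G\<^esub> s))" using WD1 iis by simp
      have VB: "?V \<in> ?B" and VD1: "?V \<subseteq> Dg (inv\<^bsub>G\<^esub> s)" using Phi_Tc[OF is' WB WD1'] by blast+
      have e: "inv\<^bsub>G\<^esub> s \<otimes>\<^bsub>G\<^esub> (s \<otimes>\<^bsub>G\<^esub> t) = t" using s t by (simp add: G.m_assoc[symmetric])
      have VD2: "?V \<subseteq> Dg t"
      proof
        fix \<xi> assume "\<xi> \<in> ?V"
        then obtain \<eta> where "\<eta> \<in> W" "\<xi> = Phi (inv\<^bsub>G\<^esub> s) \<eta>" by blast
        then show "\<xi> \<in> Dg t" using Phi_cross[OF is' st, of \<eta>] WD1' WD2 e by auto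
      qed
      have V1: "?V \<in> ?I (inv\<^bsub>G\<^esub> s)" and V2: "?V \<in> ?I t" using VB VD1 VD2 unfolding Ig_char by blast+
      have "?th s ?V = Phi s ` ?V" by (rule theta_eq[OF s V1])
      also have "\<dots> = W"
      proof -
        have "Phi s (Phi (inv\<^bsub>G\<^esub> s) \<eta>) = \<eta>" if "\<eta> \<in> W" for \<eta>
          using Phi_inv[OF is', of \<eta>] that WD1' iis by auto
        then show ?thesis by (force simp: image_image)
      qed
      finally show "W \<in> ?th s ` (?I (inv\<^bsub>G\<^esub> s) \<inter> ?I t)" using V1 V2 by (metis IntI image_eqI)
    }
  qed
  have h5: "\<forall>s\<in>carrier G. \<forall>t\<in>carrier G. \<forall>x\<in>?I (inv\<^bsub>G\<^esub> t) \<inter> ?I (inv\<^bsub>G\<^esub> (s \<otimes>\<^bsub>G\<^esub> t)).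
        ?th s (?th t x) = ?th (s \<otimes>\<^bsub>G\<^esub> t) x"
  proof (intro ballI)
    fix s t x assume s: "s \<in> carrier G" and t: "t \<in> carrier G" and x: "x \<in> ?I (inv\<^bsub>G\<^esub> t) \<inter> ?I (inv\<^bsub>G\<^esub> (s \<otimes>\<^bsub>G\<^esub> t))"
    have st: "s \<otimes>\<^bsub>G\<^esub> t \<in> carrier G" using s t by simp
    have ist: "inv\<^bsub>G\<^esub> (s \<otimes>\<^bsub>G\<^esub> t) \<in> carrier G" using st by simp
    have x1: "x \<in> ?I (inv\<^bsub>G\<^esub> t)" and x2: "x \<in> ?I (inv\<^bsub>G\<^esub> (s \<otimes>\<^bsub>G\<^esub> t))" using x by blast+
    have xB: "x \<in> ?B" and xD1: "x \<subseteq> Dg (inv\<^bsub>G\<^esub> t)" and xD2: "x \<subseteq> Dg (inv\<^bsub>G\<^esub> (s \<otimes>\<^bsub>G\<^esub> t))"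
      using x1 x2 unfolding Ig_char by blast+
    have e: "t \<otimes>\<^bsub>G\<^esub> inv\<^bsub>G\<^esub> (s \<otimes>\<^bsub>G\<^esub> t) = inv\<^bsub>G\<^esub> s"
      using s t by (simp add: G.inv_mult_group G.m_assoc[symmetric])
    have tx: "?th t x = Phi t ` x" by (rule theta_eq[OF t x1])
    have "Phi t ` x \<in> ?B" using Phi_Tc[OF t xB xD1] by blast
    moreover have "Phi t ` x \<subseteq> Dg (inv\<^bsub>G\<^esub> s)"
    proof
      fix \<xi> assume "\<xi> \<in> Phi t ` x"
      then obtain \<eta> where "\<eta> \<in> x" "\<xi> = Phi t \<eta>" by blast
      then show "\<xi> \<in> Dg (inv\<^bsub>G\<^esub> s)" using Phi_cross[OF t ist, of \<eta>] xD1 xD2 e by auto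
    qed
    ultimately have txI: "Phi t ` x \<in> ?I (inv\<^bsub>G\<^esub> s)" unfolding Ig_char by blast
    have "?th s (?th t x) = Phi s ` Phi t ` x" using tx theta_eq[OF s txI] by simp
    also have "\<dots> = Phi (s \<otimes>\<^bsub>G\<^esub> t) ` x"
    proof -
      have "Phi s (Phi t \<eta>) = Phi (s \<otimes>\<^bsub>G\<^esub> t) \<eta>" if "\<eta> \<in> x" for \<eta>
        using Phi_comp[OF s t, of \<eta>] that xD1 xD2 by blast
      then show ?thesis by (force simp: image_image)
    qed
    also have "\<dots> = ?th (s \<otimes>\<^bsub>G\<^esub> t) x" using theta_eq[OF st x2] by simp
    finally show "?th s (?th t x) = ?th (s \<otimes>\<^bsub>G\<^esub> t) x" .
  qed
  show ?thesis unfolding partial_action_def by (intro conjI h1 h2 h3 h4 h5)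
qed

end

theorem mainTheorem13:
  fixes sm :: "'a \<Rightarrow> 'a \<Rightarrow> 'a" and z :: 'a
    and G :: "('g, 'b) monoid_scheme" and \<phi> :: "'a \<Rightarrow> 'g"
  assumes "inverse_semigroup_zero sm z"
    and "group G"
    and "pure_grading sm z G \<phi>"
  shows "partial_action G (Tc (idems sm) sm) (Ig sm z \<phi>) (theta sm z G \<phi>)"
proof -
  interpret graded sm z G \<phi>
    by (intro graded.intro invsg.intro graded_axioms.intro assms)
  show ?thesis by (rule PA)
qed

end
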